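(* Fix $q\in[0,1]$, $p\in(0,1)\setminus\{1/2\}$, $f:[0,1]\to[0,1]$, and a nondecreasing sequence of positive integers $k(n)$ with $k(n)\leq n$ and $k(n)\to\infty$. Let $\{S_n\}$ be the elephant random walk with $k(n)$ extractions with replacement described in the context, and $g(x)=pf(x)+(1-p)\{1-f(x)\}$. Assume one of: (F1) $f$ is continuous on $[0,1]$ and $\sum_{n\geq1}\frac{1}{n+1}\sup\{|f(x)-f(y)|:x,y\in[0,1],|x-y|<k(n)^{-1/2}\}<\infty$; (F2) for some $0<\alpha\leq1$ and $L>0$, $|f(x)-f(y)|\leq L|x-y|^{\alpha}$ for all $x,y\in[0,1]$, and $\sum_{n\geq1}(n+1)^{-1}k(n)^{-\alpha/2}<\infty$; (F3) $f$ is continuously differentiable on $[0,1]$ and $\sum_{n\geq1}\frac{1}{(n+1)\sqrt{k(n)}}\sup\{|f'(x)-f'(y)|:x,y\in[0,1],|x-y|<k(n)^{-1/2}\}<\infty$; (F4) $f$ is twice continuously differentiable on $[0,1]$ and $\sum_{n\geq1}(n+1)^{-1}k(n)^{-1}<\infty$. If $g$ has a unique fixed point $x^*\in[0,1]$ such that $\{g(x)-x\}(x-x^* )<0$ for every $x\in[0,1]\setminus\{x^*\}$, then $S_n/n\to 2x^*-1$ almost surely. In particular (still assuming one of (F1)–(F4)) the same conclusion holds whenever $g$ has a unique fixed point $x^*$ in $[0,1]$, and in particular whenever one of the following holds: (G1) $f$ is continuously differentiable on $[0,1]$, and either $p\in(1/2,1)$ and $f$ is strictly decreasing on $[0,1]$,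 or $p\in(0,1/2)$ and $f$ is strictly increasing on $[0,1]$; (G2) $f$ is twice continuously differentiable on $[0,1]$ and is either strictly convex on $(0,1)$ or strictly concave on $(0,1)$; (G3) $|f(x)-f(y)|\leq c|x-y|$ for all $x,y\in[0,1]$ for some $c$ with $c|2p-1|<1$.
   Context: The model: set $X_0=S_0=0$ and let $X_1\in\{\pm1\}$ with $P(X_1=1)=q$. Let $\mathcal{F}_n$ be the $\sigma$-field of all information of the process up to time $n$. For each $n\geq1$, draw $U_{n,1},\dots,U_{n,k(n)}$ i.i.d. uniform on $\{1,\dots,n\}$ (independently of the past), set $C_n^+=\sum_{i=1}^{k(n)}\chi\{X_{U_{n,i}}=1\}$, and, conditionally on $\mathcal{F}_n$ and the $U_{n,i}$, let $X_{n+1}=1$ with probability $pf(C_n^+/k(n))+(1-p)\{1-f(C_n^+/k(n))\}$ and $X_{n+1}=-1$ otherwise. Set $S_n=\sum_{i=1}^n X_i$. *)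

theory Defs
  imports "HOL-Probability.Probability"
begin

definition erw_g :: "real \<Rightarrow> (real \<Rightarrow> real) \<Rightarrow> real \<Rightarrow> real" where
  "erw_g p f x = p * f x + (1 - p) * (1 - f x)"

definition strictly_convex_on :: "real set \<Rightarrow> (real \<Rightarrow> real) \<Rightarrow> bool" where
  "strictly_convex_on S f \<longleftrightarrow>
     (\<forall>x\<in>S. \<forall>y\<in>S. x \<noteq> y \<longrightarrow>
        (\<forall>t\<in>{0<..<1}. f ((1 - t) * x + t * y) < (1 - t) * f x + t * f y))"

definition modulus01 :: "(real \<Rightarrow> real) \<Rightarrow> real \<Rightarrow> real" where
  "modulus01 h d = Sup {\<bar>h x - h y\<bar> | x y. x \<in> {0..1} \<and> y \<in> {0..1} \<and> \<bar>x - y\<bar> < d}"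

definition C1_01 :: "(real \<Rightarrow> real) \<Rightarrow> (real \<Rightarrow> real) \<Rightarrow> bool" where
  "C1_01 f f' \<longleftrightarrow> (\<forall>x\<in>{0..1}. (f has_real_derivative f' x) (at x within {0..1}))
                   \<and> continuous_on {0..1} f'"

definition C2_01 :: "(real \<Rightarrow> real) \<Rightarrow> bool" where
  "C2_01 f \<longleftrightarrow> (\<exists>f' f''. (\<forall>x\<in>{0..1}. (f has_real_derivative f' x) (at x within {0..1}))
                   \<and> C1_01 f' f'')"

text \<open>History (the information generating F_n): X_1..X_n and U_{m,i} for 1<=m<n, 1<=i<=k(m).\<close>
definition erw_hist ::
  "(nat \<Rightarrow> nat) \<Rightarrow> (nat \<Rightarrow> 'a \<Rightarrow> real) \<Rightarrow> (nat \<Rightarrow> nat \<Rightarrow> 'a \<Rightarrow> nat) \<Rightarrow> nat \<Rightarrow> 'a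
     \<Rightarrow> real list \<times> nat list list" where
  "erw_hist k X U n \<omega> =
     (map (\<lambda>i. X i \<omega>) [1..<n+1], map (\<lambda>m. map (\<lambda>i. U m i \<omega>) [1..<k m + 1]) [1..<n])"

definition erw_Uvec :: "(nat \<Rightarrow> nat) \<Rightarrow> (nat \<Rightarrow> nat \<Rightarrow> 'a \<Rightarrow> nat) \<Rightarrow> nat \<Rightarrow> 'a \<Rightarrow> nat list" where
  "erw_Uvec k U n \<omega> = map (\<lambda>i. U n i \<omega>) [1..<k n + 1]"

definition erw_C :: "(nat \<Rightarrow> nat) \<Rightarrow> (nat \<Rightarrow> 'a \<Rightarrow> real) \<Rightarrow> (nat \<Rightarrow> nat \<Rightarrow> 'a \<Rightarrow> nat) \<Rightarrow> nat \<Rightarrow> 'a \<Rightarrow> nat" where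
  "erw_C k X U n \<omega> = card {i \<in> {1..k n}. X (U n i \<omega>) \<omega> = 1}"

text \<open>Since all variables are discrete,
  the conditional laws are stated via elementary conditional probabilities on the
  generating events of F_n and of sigma(F_n, U_n).\<close>
definition erw_process ::
  "'a measure \<Rightarrow> real \<Rightarrow> real \<Rightarrow> (real \<Rightarrow> real) \<Rightarrow> (nat \<Rightarrow> nat)
     \<Rightarrow> (nat \<Rightarrow> 'a \<Rightarrow> real) \<Rightarrow> (nat \<Rightarrow> nat \<Rightarrow> 'a \<Rightarrow> nat) \<Rightarrow> bool" where
  "erw_process M q p f k X U \<longleftrightarrow>
     prob_space M \<and>
     (\<forall>n. X n \<in> measurable M (count_space UNIV)) \<and>
     (\<forall>n\<ge>1. \<forall>i\<in>{1..k n}. U n i \<in> measurable M (count_space UNIV)) \<and>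
     (\<forall>\<omega>\<in>space M. X 0 \<omega> = 0) \<and>
     (\<forall>n\<ge>1. \<forall>\<omega>\<in>space M. X n \<omega> \<in> {-1, 1}) \<and>
     (\<forall>n\<ge>1. \<forall>i\<in>{1..k n}. \<forall>\<omega>\<in>space M. U n i \<omega> \<in> {1..n}) \<and>
     measure M {\<omega>\<in>space M. X 1 \<omega> = 1} = q \<and>
     \<comment> \<open>U_{n,1..k(n)} i.i.d. uniform on {1..n}, independent of F_n\<close>
     (\<forall>n\<ge>1. \<forall>S u. length u = k n \<longrightarrow> set u \<subseteq> {1..n} \<longrightarrow>
        measure M {\<omega>\<in>space M. erw_hist k X U n \<omega> \<in> S \<and> erw_Uvec k U n \<omega> = u}
          = measure M {\<omega>\<in>space M. erw_hist k X U n \<omega> \<in> S} / real n ^ k n) \<and>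
     \<comment> \<open>P(X_{n+1} = 1 | F_n, U_n) = g(C_n^+ / k(n))\<close>
     (\<forall>n\<ge>1. \<forall>T.
        measure M {\<omega>\<in>space M. (erw_hist k X U n \<omega>, erw_Uvec k U n \<omega>) \<in> T \<and> X (Suc n) \<omega> = 1}
          = (LINT \<omega>:{\<omega>\<in>space M. (erw_hist k X U n \<omega>, erw_Uvec k U n \<omega>) \<in> T}|M.
               erw_g p f (real (erw_C k X U n \<omega>) / real (k n))))"

end

theory Submission
  imports Defs
begin


lemma sa_upper:
  fixes g :: "real \<Rightarrow> real" and y v e :: "nat \<Rightarrow> real"
  assumes gc: "continuous_on {0..1} g" and gr: "\<forall>x\<in>{0..1}. g x \<in> {0..1}"
    and xs: "xs \<in> {0..1}" and sgn: "\<forall>x\<in>{0..1}. x \<noteq> xs \<longrightarrow> (g x - x) * (x - xs) < 0"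
    and y: "\<forall>n. y n \<in> {0..1}"
    and rec: "\<forall>n\<ge>1. real (n+1) * v (n+1) = real n * v n + g (y n) + e n"
    and e: "e \<longlonglongrightarrow> 0" and yv: "(\<lambda>n. y n - v n) \<longlonglongrightarrow> 0"
    and eps: "\<epsilon> > 0"
  shows "eventually (\<lambda>n. v n \<le> xs + 2 * \<epsilon>) sequentially"
proof -
  obtain \<delta> where dpos: "\<delta> > 0" and dprop: "\<forall>x\<in>{0..1}. x \<ge> xs + \<epsilon>/2 \<longrightarrow> g x - x \<le> - \<delta>"
  proof (cases "xs + \<epsilon>/2 \<le> 1")
    case True
    have "continuous_on {xs + \<epsilon>/2..1} (\<lambda>x. g x - x)"
      by (rule continuous_on_subset[of "{0..1}"]) (use xs eps in \<open>auto intro!: continuous_intros gc\<close>)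
    then obtain x0 where x0: "x0 \<in> {xs + \<epsilon>/2..1}" and mx: "\<forall>x\<in>{xs + \<epsilon>/2..1}. g x - x \<le> g x0 - x0"
      using continuous_attains_sup[of "{xs + \<epsilon>/2..1}" "\<lambda>x. g x - x"] True by auto
    have "x0 \<in> {0..1}" "x0 \<noteq> xs" using x0 xs eps by auto
    with sgn have "(g x0 - x0) * (x0 - xs) < 0" by auto
    moreover have "x0 - xs > 0" using x0 eps by auto
    ultimately have neg: "g x0 - x0 < 0" by (simp add: mult_less_0_iff)
    show ?thesis
      by (rule that[of "-(g x0 - x0)"]) (use neg mx in auto)
  next
    case False
    show ?thesis by (rule that[of 1]) (use False in auto)
  qed
  define \<eta> where "\<eta> = min (min (\<epsilon>/2) (\<delta>/4)) 1"
  have eta: "\<eta> > 0" "\<eta> \<le> \<epsilon>/2" "\<eta> \<le> \<delta>/4" "\<eta> \<le> 1" using eps dpos by (auto simp: \<eta>_def)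
  have ev1: "eventually (\<lambda>n. \<bar>e n\<bar> < \<eta>) sequentially"
    using e eta(1) unfolding tendsto_iff by (auto simp: dist_real_def)
  have ev2: "eventually (\<lambda>n. \<bar>y n - v n\<bar> < \<eta>) sequentially"
    using yv eta(1) unfolding tendsto_iff by (auto simp: dist_real_def)
  have ev3: "eventually (\<lambda>n. real n \<ge> 3 / \<epsilon> \<and> n \<ge> 1) sequentially"
  proof -
    obtain N :: nat where "real N \<ge> 3 / \<epsilon>" using real_arch_simple by blast
    then show ?thesis unfolding eventually_sequentially
      by (intro exI[of _ "N+1"]) auto
  qed
  from eventually_conj[OF ev1 eventually_conj[OF ev2 ev3]]
  obtain N where N: "\<And>n. n \<ge> N \<Longrightarrow> \<bar>e n\<bar> < \<eta> \<and> \<bar>y n - v n\<bar> < \<eta> \<and> real n \<ge> 3 / \<epsilon> \<and> n \<ge> 1"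
    unfolding eventually_sequentially by blast
  define c where "c = xs + \<epsilon>"
  have stepdown: "g (y n) + e n - v n \<le> - \<delta>/2" if "n \<ge> N" "v n > c" for n
  proof -
    have "y n \<ge> xs + \<epsilon>/2" using N[OF that(1)] that(2) eta by (auto simp: c_def)
    then have "g (y n) - y n \<le> -\<delta>" using dprop y by auto
    then show ?thesis using N[OF that(1)] eta by linarith
  qed
  have recn: "real (n+1) * v (n+1) = real (n+1) * v n + (g (y n) + e n - v n)" if "n \<ge> N" for n
    using rec N[OF that] by (auto simp: algebra_simps)
  have stepup: "v (n+1) \<le> v n + \<epsilon>" if "n \<ge> N" for n
  proof -
    have b: "\<bar>g (y n) + e n - v n\<bar> \<le> 3"
    proof -
      have "\<bar>g (y n) - y n\<bar> \<le> 1" proof -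
        have "y n \<in> {0..1}" using y by blast
        then have "g (y n) \<in> {0..1}" using gr by blast
        then show ?thesis using \<open>y n \<in> {0..1}\<close> by auto
      qed
      then show ?thesis using N[OF that] eta by linarith
    qed
    have np: "real (n+1) > 0" by simp
    have "v (n+1) = v n + (g (y n) + e n - v n) / real (n+1)"
      using recn[OF that] np by (simp add: field_simps)
    also have "(g (y n) + e n - v n) / real (n+1) \<le> 3 / real (n+1)"
      using b np by (intro divide_right_mono) auto
    also have "3 / real (n+1) \<le> \<epsilon>"
    proof -
      have "3 / \<epsilon> \<le> real (n+1)" using N[OF that] by simp
      then show ?thesis using eps by (simp add: field_simps)
    qed
    finally show ?thesis by simp
  qed
  have decr: "v (n+1) < v n" if "n \<ge> N" "v n > c" for n
  proof -
    have "real (n+1) * v (n+1) < real (n+1) * v n"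
      using recn[OF that(1)] stepdown[OF that] dpos by linarith
    then show ?thesis by simp
  qed
  have "\<exists>n0\<ge>N. v n0 \<le> c"
  proof (rule ccontr)
    assume na: "\<not> (\<exists>n0\<ge>N. v n0 \<le> c)"
    have above: "v n > c" if "n \<ge> N" for n using na that not_le by blast
    have lnstep: "ln (real (n+2)) - ln (real (n+1)) \<le> 1 / real (n+1)" for n
    proof -
      have "ln (real (n+2)) - ln (real (n+1)) = ln (1 + 1 / real (n+1))"
      proof -
        have "1 + 1 / real (n+1) = real (n+2) / real (n+1)" by (simp add: field_simps)
        then show ?thesis by (simp add: ln_div)
      qed
      also have "\<dots> \<le> 1 / real (n+1)" by (rule ln_add_one_self_le_self) simp
      finally show ?thesis .
    qed
    have onestep: "v (n+1) + \<delta>/2 * ln (real (n+2)) \<le> v n + \<delta>/2 * ln (real (n+1))" if nN: "n \<ge> N" for n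
    proof -
      have np: "real (n+1) > 0" by simp
      have "v (n+1) = v n + (g (y n) + e n - v n) / real (n+1)"
        using recn[OF nN] np by (simp add: field_simps)
      also have "(g (y n) + e n - v n) / real (n+1) \<le> (- \<delta>/2) / real (n+1)"
        using stepdown[OF nN above[OF nN]] np by (intro divide_right_mono) auto
      finally have "v (n+1) \<le> v n - \<delta>/2 * (1 / real (n+1))" by simp
      moreover have "\<delta>/2 * (ln (real (n+2)) - ln (real (n+1))) \<le> \<delta>/2 * (1 / real (n+1))"
        using lnstep[of n] dpos by (intro mult_left_mono) auto
      ultimately show ?thesis by (simp only: right_diff_distrib)
    qed
    have lin: "v (N + j) + \<delta>/2 * ln (real (N + j + 1)) \<le> v N + \<delta>/2 * ln (real (N + 1))" for j
    proof (induction j)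
      case 0 then show ?case by simp
    next
      case (Suc j)
      from onestep[of "N + j"] Suc show ?case by (simp add: algebra_simps)
    qed
    define L where "L = (v N + \<delta>/2 * ln (real (N + 1)) - c) * 2 / \<delta>"
    obtain j :: nat where j: "real j > exp L" using reals_Archimedean2 by blast
    have "ln (real (N + j + 1)) > L"
    proof -
      have "exp L < real (N + j + 1)" using j by simp
      then have "ln (exp L) < ln (real (N + j + 1))" by (subst ln_less_cancel_iff) auto
      then show ?thesis by simp
    qed
    then have "\<delta>/2 * ln (real (N + j + 1)) > \<delta>/2 * L" using dpos by simp
    also have "\<delta>/2 * L = v N + \<delta>/2 * ln (real (N + 1)) - c" using dpos by (simp add: L_def)
    finally have "v (N + j) < c" using lin[of j] by linarith
    with above[of "N+j"] show False by simp
  qed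
  then obtain n0 where n0: "n0 \<ge> N" "v n0 \<le> c" by blast
  have "v (n0 + j) \<le> c + \<epsilon>" for j
  proof (induction j)
    case 0 then show ?case using n0 eps by simp
  next
    case (Suc j)
    show ?case
    proof (cases "v (n0 + j) \<le> c")
      case True then show ?thesis using stepup[of "n0 + j"] n0 by simp
    next
      case False then show ?thesis using decr[of "n0 + j"] n0 Suc by simp
    qed
  qed
  then show ?thesis unfolding eventually_sequentially c_def
    by (intro exI[of _ n0]) (metis le_add_diff_inverse mult_2 add.assoc)
qed

lemma sa_conv:
  fixes g :: "real \<Rightarrow> real" and y v e :: "nat \<Rightarrow> real"
  assumes gc: "continuous_on {0..1} g" and gr: "\<forall>x\<in>{0..1}. g x \<in> {0..1}"
    and xs: "xs \<in> {0..1}" and sgn: "\<forall>x\<in>{0..1}. x \<noteq> xs \<longrightarrow> (g x - x) * (x - xs) < 0"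
    and y: "\<forall>n. y n \<in> {0..1}"
    and rec: "\<forall>n\<ge>1. real (n+1) * v (n+1) = real n * v n + g (y n) + e n"
    and e: "e \<longlonglongrightarrow> 0" and yv: "(\<lambda>n. y n - v n) \<longlonglongrightarrow> 0"
  shows "y \<longlonglongrightarrow> xs"
proof -
  have up: "eventually (\<lambda>n. v n \<le> xs + 2 * \<epsilon>) sequentially" if "\<epsilon> > 0" for \<epsilon>
    by (rule sa_upper[OF gc gr xs sgn y rec e yv that])
  have low: "eventually (\<lambda>n. 1 - v n \<le> (1 - xs) + 2 * \<epsilon>) sequentially" if "\<epsilon> > 0" for \<epsilon>
  proof (rule sa_upper[where g="\<lambda>x. 1 - g (1 - x)" and y="\<lambda>n. 1 - y n" and e="\<lambda>n. - e n"])
    show "continuous_on {0..1} (\<lambda>x. 1 - g (1 - x))"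
    proof -
      have "continuous_on {0..1} (\<lambda>x. g (1 - x))"
        by (rule continuous_on_compose2[OF gc]) (auto intro!: continuous_intros)
      then show ?thesis by (intro continuous_intros)
    qed
    show "\<forall>x\<in>{0..1}. 1 - g (1 - x) \<in> {0..1}" using gr by auto
    show "1 - xs \<in> {0..1}" using xs by auto
    show "\<forall>x\<in>{0..1}. x \<noteq> 1 - xs \<longrightarrow> (1 - g (1 - x) - x) * (x - (1 - xs)) < 0"
    proof (intro ballI impI)
      fix x :: real assume x: "x \<in> {0..1}" "x \<noteq> 1 - xs"
      have "1 - x \<in> {0..1}" "1 - x \<noteq> xs" using x by auto
      with sgn have "(g (1-x) - (1-x)) * ((1-x) - xs) < 0" by blast
      then show "(1 - g (1 - x) - x) * (x - (1 - xs)) < 0" by (simp add: algebra_simps)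
    qed
    show "\<forall>n. 1 - y n \<in> {0..1}" using y by auto
    show "\<forall>n\<ge>1. real (n+1) * (1 - v (n+1)) = real n * (1 - v n) + (1 - g (1 - (1 - y n))) + - e n"
      using rec by (auto simp: algebra_simps)
    show "(\<lambda>n. - e n) \<longlonglongrightarrow> 0" using tendsto_minus[OF e] by simp
    show "(\<lambda>n. (1 - y n) - (1 - v n)) \<longlonglongrightarrow> 0" using tendsto_minus[OF yv] by simp
    show "\<epsilon> > 0" by fact
  qed
  have vl: "v \<longlonglongrightarrow> xs"
    unfolding tendsto_iff dist_real_def
  proof (intro allI impI)
    fix r :: real assume r: "r > 0"
    have "r/3 > 0" using r by simp
    from eventually_conj[OF up[OF this] low[OF this]]
    show "eventually (\<lambda>n. \<bar>v n - xs\<bar> < r) sequentially"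
      by eventually_elim (use r in auto)
  qed
  have "(\<lambda>n. v n + (y n - v n)) \<longlonglongrightarrow> xs + 0" by (intro tendsto_add vl yv)
  then show ?thesis by simp
qed


lemma g_alt: "erw_g p f x = (2*p - 1) * f x + (1 - p)"
  by (simp add: erw_g_def algebra_simps)

lemma g_range:
  assumes p: "p \<in> {0<..<1}" and fx: "f x \<in> {0..1}"
  shows "erw_g p f x > 0" "erw_g p f x < 1" "erw_g p f x \<in> {0..1}"
proof -
  have a: "p * f x \<ge> 0" "(1-p) * (1 - f x) \<ge> 0" "p * f x \<le> p" "(1-p)*(1 - f x) \<le> 1 - p"
    using p fx by (auto intro!: mult_nonneg_nonneg mult_left_le)
  have "p * f x > 0 \<or> (1-p) * (1 - f x) > 0"
  proof (cases "f x > 0")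
    case True then show ?thesis using p by auto
  next
    case False then have "f x = 0" using fx by auto
    then show ?thesis using p by auto
  qed
  then show "erw_g p f x > 0" using a by (auto simp: erw_g_def)
  have "p * f x < p \<or> (1-p) * (1 - f x) < 1 - p"
  proof (cases "f x < 1")
    case True then show ?thesis using p by auto
  next
    case False then have "f x = 1" using fx by auto
    then show ?thesis using p by auto
  qed
  then show "erw_g p f x < 1" using a by (auto simp: erw_g_def)
  then show "erw_g p f x \<in> {0..1}" using \<open>erw_g p f x > 0\<close> by auto
qed

lemma g_cont:
  assumes "continuous_on {0..1} f"
  shows "continuous_on {0..1} (erw_g p f)"
  unfolding erw_g_def by (intro continuous_intros assms)

lemma fp_exists:
  fixes g :: "real \<Rightarrow> real"
  assumes gc: "continuous_on {0..1} g" and g0: "g 0 \<ge> 0" and g1: "g 1 \<le> 1"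
  shows "\<exists>xs\<in>{0..1}. g xs = xs"
proof -
  have "continuous_on {0..1} (\<lambda>x. g x - x)" by (intro continuous_intros gc)
  from IVT2'[of "\<lambda>x. g x - x" 1 0 0, OF _ _ _ this] g0 g1
  obtain x where "0 \<le> x" "x \<le> 1" "g x - x = 0" by auto
  then show ?thesis by auto
qed

lemma fp_sign:
  fixes g :: "real \<Rightarrow> real"
  assumes gc: "continuous_on {0..1} g" and g0: "g 0 \<ge> 0" and g1: "g 1 \<le> 1"
    and xs: "xs \<in> {0..1}" "g xs = xs" and uniq: "\<forall>x\<in>{0..1}. g x = x \<longrightarrow> x = xs"
  shows "\<forall>x\<in>{0..1}. x \<noteq> xs \<longrightarrow> (g x - x) * (x - xs) < 0"
proof (intro ballI impI)
  fix x assume x: "x \<in> {0..1}" "x \<noteq> xs"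
  have hc: "continuous_on {a..b} (\<lambda>x. g x - x)" if "{a..b} \<subseteq> {0..1}" for a b
    by (rule continuous_on_subset[OF _ that]) (intro continuous_intros gc)
  show "(g x - x) * (x - xs) < 0"
  proof (cases "x < xs")
    case True
    have "g x - x > 0"
    proof (rule ccontr)
      assume "\<not> g x - x > 0"
      then have "g x - x \<le> 0" by simp
      from IVT2'[of "\<lambda>x. g x - x" x 0 0, OF this _ _ hc] g0 x
      obtain z where "0 \<le> z" "z \<le> x" "g z - z = 0" by auto
      then have "z = xs" using uniq x by auto
      with \<open>z \<le> x\<close> True show False by simp
    qed
    then show ?thesis using True by (simp add: mult_pos_neg)
  next
    case False
    then have xg: "x > xs" using x by simp
    have "g x - x < 0"
    proof (rule ccontr)
      assume "\<not> g x - x < 0"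
      then have "g x - x \<ge> 0" by simp
      from IVT2'[of "\<lambda>x. g x - x" 1 0 x, OF _ this _ hc] g1 x
      obtain z where "x \<le> z" "z \<le> 1" "g z - z = 0" by auto
      then have "z = xs" using uniq x by auto
      with \<open>x \<le> z\<close> xg show False by simp
    qed
    then show ?thesis using xg by (simp add: mult_neg_pos)
  qed
qed

lemma sc_affine:
  assumes "strictly_convex_on S \<phi>" "c > 0"
  shows "strictly_convex_on S (\<lambda>x. c * \<phi> x + a * x + b)"
  unfolding strictly_convex_on_def
proof (intro ballI impI)
  fix x y t assume xy: "x \<in> S" "y \<in> S" "x \<noteq> y" and t: "t \<in> {0<..<1::real}"
  have "\<phi> ((1 - t) * x + t * y) < (1 - t) * \<phi> x + t * \<phi> y"
    using assms(1) xy t unfolding strictly_convex_on_def by blast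
  then have "c * \<phi> ((1 - t) * x + t * y) < c * ((1 - t) * \<phi> x + t * \<phi> y)"
    using assms(2) by simp
  then show "c * \<phi> ((1 - t) * x + t * y) + a * ((1 - t) * x + t * y) + b
         < (1 - t) * (c * \<phi> x + a * x + b) + t * (c * \<phi> y + a * y + b)"
    by (simp add: algebra_simps)
qed

lemma sc_reflect:
  assumes "strictly_convex_on {0<..<1} \<phi>"
  shows "strictly_convex_on {0<..<1} (\<lambda>x. \<phi> (1 - x))"
  unfolding strictly_convex_on_def
proof (intro ballI impI)
  fix x y t :: real assume xy: "x \<in> {0<..<1}" "y \<in> {0<..<1}" "x \<noteq> y" and t: "t \<in> {0<..<1::real}"
  have "\<phi> ((1 - t) * (1-x) + t * (1-y)) < (1 - t) * \<phi> (1-x) + t * \<phi> (1-y)"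
    using assms xy t unfolding strictly_convex_on_def by auto
  moreover have "(1 - t) * (1-x) + t * (1-y) = 1 - ((1 - t) * x + t * y)" by (simp add: algebra_simps)
  ultimately show "\<phi> (1 - ((1 - t) * x + t * y)) < (1 - t) * \<phi> (1 - x) + t * \<phi> (1 - y)" by simp
qed

lemma sc_unique_root:
  fixes \<phi> :: "real \<Rightarrow> real"
  assumes c: "continuous_on {0..1} \<phi>" and p0: "\<phi> 0 > 0" and p1: "\<phi> 1 < 0"
    and sc: "strictly_convex_on {0<..<1} \<phi>"
  shows "\<forall>x\<in>{0..1}. \<forall>y\<in>{0..1}. \<phi> x = 0 \<longrightarrow> \<phi> y = 0 \<longrightarrow> x = y"
proof -
  have main: "False" if xy: "x \<in> {0..1}" "y \<in> {0..1}" "\<phi> x = 0" "\<phi> y = 0" "x < y" for x y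
  proof -
    have x01: "x \<in> {0<..<1}" "y \<in> {0<..<1}" using xy p0 p1 by (auto simp: less_le)
    have pos: "\<phi> z > 0" if z: "z \<in> {y<..<1}" for z
    proof -
      define t where "t = (y - x) / (z - x)"
      have zx: "z - x > 0" using z xy by auto
      have t01: "t \<in> {0<..<1}" using z xy zx by (auto simp: t_def field_simps)
      have tz: "t * (z - x) = y - x" using zx by (simp add: t_def)
      have "(1 - t) * x + t * z = x + t * (z - x)" by (simp add: algebra_simps)
      then have "(1 - t) * x + t * z = y" using tz by simp
      moreover have "x \<noteq> z" "z \<in> {0<..<1}" using z x01 xy by auto
      ultimately have "\<phi> y < (1 - t) * \<phi> x + t * \<phi> z"
        using sc x01 t01 unfolding strictly_convex_on_def by metis
      then have "0 < t * \<phi> z" using xy by simp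
      then show ?thesis using t01 by (simp add: zero_less_mult_iff)
    qed
    define z where "z = (y + 1) / 2"
    have z: "z \<in> {y<..<1}" using x01 by (auto simp: z_def)
    have "continuous_on {z..1} \<phi>" by (rule continuous_on_subset[OF c]) (use z x01 in auto)
    from IVT2'[of \<phi> 1 0 z, OF _ _ _ this] p1 pos[OF z] z
    obtain w where w: "z \<le> w" "w \<le> 1" "\<phi> w = 0" by auto
    have "w \<noteq> 1" using w p1 by auto
    then have "w \<in> {y<..<1}" using w z by auto
    with pos[of w] w show False by simp
  qed
  show ?thesis
  proof (intro ballI impI)
    fix x y assume "x \<in> {0..1}" "y \<in> {0..1}" "\<phi> x = 0" "\<phi> y = 0"
    then show "x = y" using main[of x y] main[of y x] by (cases x y rule: linorder_cases) auto
  qed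
qed

lemma f_cont_from_F:
  fixes f :: "real \<Rightarrow> real"
  assumes F: "continuous_on {0..1} f
          \<or> (\<exists>\<alpha> L. 0 < \<alpha> \<and> \<alpha> \<le> 1 \<and> L > 0 \<and>
              (\<forall>x\<in>{0..1}. \<forall>y\<in>{0..1}. \<bar>f x - f y\<bar> \<le> L * \<bar>x - y\<bar> powr \<alpha>))
          \<or> (\<exists>f'. C1_01 f f') \<or> C2_01 f"
  shows "continuous_on {0..1} f"
proof -
  have deriv: "continuous_on {0..1} f" if "\<forall>x\<in>{0..1}. (f has_real_derivative f' x) (at x within {0..1})" for f'
    unfolding continuous_on_eq_continuous_within using that DERIV_continuous by blast
  show ?thesis
  proof -
    consider "continuous_on {0..1} f"
      | "\<exists>\<alpha> L. 0 < \<alpha> \<and> \<alpha> \<le> 1 \<and> L > 0 \<and>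
              (\<forall>x\<in>{0..1}. \<forall>y\<in>{0..1}. \<bar>f x - f y\<bar> \<le> L * \<bar>x - y\<bar> powr \<alpha>)"
      | "\<exists>f'. C1_01 f f'" | "C2_01 f" using F by blast
    then show ?thesis
    proof cases
      case 1 then show ?thesis .
    next
      case 2
      then obtain \<alpha> L where a: "0 < \<alpha>" "L > 0" and H: "\<forall>x\<in>{0..1}. \<forall>y\<in>{0..1}. \<bar>f x - f y\<bar> \<le> L * \<bar>x - y\<bar> powr \<alpha>"
        by blast
      show ?thesis unfolding continuous_on_iff
      proof (intro ballI allI impI)
        fix x e :: real assume x: "x \<in> {0..1}" and e: "e > 0"
        define d where "d = (e / L) powr (1 / \<alpha>)"
        have d: "d > 0" using e a by (simp add: d_def)
        have dd: "d powr \<alpha> = e / L" using e a by (simp add: d_def powr_powr)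
        show "\<exists>d>0. \<forall>x'\<in>{0..1}. dist x' x < d \<longrightarrow> dist (f x') (f x) < e"
        proof (intro exI[of _ d] conjI ballI impI d)
          fix x' assume x': "x' \<in> {0..1}" "dist x' x < d"
          have "\<bar>x' - x\<bar> powr \<alpha> < d powr \<alpha>"
            using x' a by (intro powr_less_mono2) (auto simp: dist_real_def)
          then have "L * \<bar>x' - x\<bar> powr \<alpha> < L * (e / L)" using dd a by (intro mult_strict_left_mono) auto
          then have "L * \<bar>x' - x\<bar> powr \<alpha> < e" using a by simp
          moreover have "\<bar>f x' - f x\<bar> \<le> L * \<bar>x' - x\<bar> powr \<alpha>" using H x x'(1) by blast
          ultimately show "dist (f x') (f x) < e" by (simp add: dist_real_def)
        qed
      qed
    next
      case 3 then show ?thesis using deriv unfolding C1_01_def by blast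
    next
      case 4 then show ?thesis using deriv unfolding C2_01_def by blast
    qed
  qed
qed

lemma fp_unique_G:
  fixes f :: "real \<Rightarrow> real"
  assumes p: "p \<in> {0<..<1}" "p \<noteq> 1/2" and f_range: "f ` {0..1} \<subseteq> {0..1}"
    and fc: "continuous_on {0..1} f"
    and G: "(\<exists>f'. C1_01 f f' \<and>
          ((1/2 < p \<and> strict_antimono_on {0..1} f) \<or> (p < 1/2 \<and> strict_mono_on {0..1} f)))
       \<or> (C2_01 f \<and> (strictly_convex_on {0<..<1} f \<or> strictly_convex_on {0<..<1} (\<lambda>x. - f x)))
       \<or> (\<exists>c. (\<forall>x\<in>{0..1}. \<forall>y\<in>{0..1}. \<bar>f x - f y\<bar> \<le> c * \<bar>x - y\<bar>) \<and> c * \<bar>2 * p - 1\<bar> < 1)"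
  shows "\<forall>x\<in>{0..1}. \<forall>y\<in>{0..1}. erw_g p f x = x \<longrightarrow> erw_g p f y = y \<longrightarrow> x = y"
proof -
  let ?g = "erw_g p f"
  have fr: "f x \<in> {0..1}" if "x \<in> {0..1}" for x using f_range that by blast
  have gc: "continuous_on {0..1} ?g" by (rule g_cont[OF fc])
  consider "(1/2 < p \<and> strict_antimono_on {0..1} f) \<or> (p < 1/2 \<and> strict_mono_on {0..1} f)"
    | "strictly_convex_on {0<..<1} f \<or> strictly_convex_on {0<..<1} (\<lambda>x. - f x)"
    | c where "\<forall>x\<in>{0..1}. \<forall>y\<in>{0..1}. \<bar>f x - f y\<bar> \<le> c * \<bar>x - y\<bar>" "c * \<bar>2 * p - 1\<bar> < 1"
    using G by blast
  then show ?thesis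
  proof cases
    case 1
    have dec: "?g b < ?g a" if "a \<in> {0..1}" "b \<in> {0..1}" "a < b" for a b
    proof -
      from 1 show ?thesis
      proof
        assume h: "1/2 < p \<and> strict_antimono_on {0..1} f"
        then have "f b < f a" using that monotone_onD[of "{0..1}" "(<)" "\<lambda>x y. y < x" f a b] by auto
        then show ?thesis using h by (simp add: g_alt)
      next
        assume h: "p < 1/2 \<and> strict_mono_on {0..1} f"
        then have "f a < f b" using that monotone_onD[of "{0..1}" "(<)" "(<)" f a b] by auto
        then show ?thesis using h by (simp add: g_alt mult_strict_left_mono_neg)
      qed
    qed
    show ?thesis
    proof (intro ballI impI)
      fix x y assume xy: "x \<in> {0..1}" "y \<in> {0..1}" "?g x = x" "?g y = y"
      show "x = y"
      proof (rule ccontr)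
        assume "x \<noteq> y"
        then consider "x < y" | "y < x" by linarith
        then show False using dec[of x y] dec[of y x] xy by cases auto
      qed
    qed
  next
    case 2
    let ?h = "\<lambda>x. ?g x - x"
    have hc: "continuous_on {0..1} ?h" by (intro continuous_intros gc)
    have h0: "?h 0 > 0" using g_range(1)[OF p(1), of f 0] fr[of 0] by simp
    have h1: "?h 1 < 0" using g_range(2)[OF p(1), of f 1] fr[of 1] by simp
    have heq: "?h = (\<lambda>x. (2*p-1) * f x + (-1) * x + (1 - p))" by (simp add: g_alt fun_eq_iff algebra_simps)
    have heq2: "?h = (\<lambda>x. (1 - 2*p) * (- f x) + (-1) * x + (1 - p))" by (simp add: g_alt fun_eq_iff algebra_simps)
    have heq3: "(\<lambda>x. - ?h x) = (\<lambda>x. (2*p - 1) * (- f x) + 1 * x + (p - 1))" by (simp add: g_alt fun_eq_iff algebra_simps)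
    have heq4: "(\<lambda>x. - ?h x) = (\<lambda>x. (1 - 2*p) * f x + 1 * x + (p - 1))" by (simp add: g_alt fun_eq_iff algebra_simps)
    have "strictly_convex_on {0<..<1} ?h \<or> strictly_convex_on {0<..<1} (\<lambda>x. - ?h x)"
    proof (cases "p > 1/2")
      case True
      then have c: "2*p - 1 > 0" by simp
      from 2 show ?thesis
      proof
        assume "strictly_convex_on {0<..<1} f"
        from sc_affine[OF this c, of "-1" "1-p"] have "strictly_convex_on {0<..<1} ?h" by (simp only: heq[symmetric])
        then show ?thesis by blast
      next
        assume "strictly_convex_on {0<..<1} (\<lambda>x. - f x)"
        from sc_affine[OF this c, of 1 "p-1"] have "strictly_convex_on {0<..<1} (\<lambda>x. - ?h x)" by (simp only: heq3[symmetric])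
        then show ?thesis by blast
      qed
    next
      case False
      then have c: "1 - 2*p > 0" using p by auto
      from 2 show ?thesis
      proof
        assume "strictly_convex_on {0<..<1} f"
        from sc_affine[OF this c, of 1 "p-1"] have "strictly_convex_on {0<..<1} (\<lambda>x. - ?h x)" by (simp only: heq4[symmetric])
        then show ?thesis by blast
      next
        assume "strictly_convex_on {0<..<1} (\<lambda>x. - f x)"
        from sc_affine[OF this c, of "-1" "1-p"] have "strictly_convex_on {0<..<1} ?h" by (simp only: heq2[symmetric])
        then show ?thesis by blast
      qed
    qed
    then show ?thesis
    proof
      assume sc: "strictly_convex_on {0<..<1} ?h"
      from sc_unique_root[OF hc h0 h1 sc] show ?thesis by auto
    next
      assume sc: "strictly_convex_on {0<..<1} (\<lambda>x. - ?h x)"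
      have sc': "strictly_convex_on {0<..<1} (\<lambda>x. - ?h (1 - x))" using sc_reflect[OF sc] by simp
      have hc': "continuous_on {0..1} (\<lambda>x. - ?h (1 - x))"
      proof -
        have "continuous_on {0..1} (\<lambda>x. ?h (1 - x))"
          by (rule continuous_on_compose2[OF hc]) (auto intro!: continuous_intros)
        from continuous_on_minus[OF this] show ?thesis .
      qed
      have U: "\<forall>x\<in>{0..1}. \<forall>y\<in>{0..1}. - ?h (1 - x) = 0 \<longrightarrow> - ?h (1 - y) = 0 \<longrightarrow> x = y"
        by (rule sc_unique_root[OF hc' _ _ sc']) (use h0 h1 in auto)
      show ?thesis
      proof (intro ballI impI)
        fix x y assume xy: "x \<in> {0..1}" "y \<in> {0..1}" "?g x = x" "?g y = y"
        have "1 - x = 1 - y" using U[rule_format, of "1-x" "1-y"] xy by auto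
        then show "x = y" by simp
      qed
    qed
  next
    case 3
    show ?thesis
    proof (intro ballI impI)
      fix x y assume xy: "x \<in> {0..1}" "y \<in> {0..1}" "?g x = x" "?g y = y"
      have "\<bar>x - y\<bar> = \<bar>?g x - ?g y\<bar>" using xy by simp
      also have "\<dots> = \<bar>2*p - 1\<bar> * \<bar>f x - f y\<bar>" by (simp add: g_alt abs_mult[symmetric] algebra_simps)
      also have "\<dots> \<le> \<bar>2*p - 1\<bar> * (c * \<bar>x - y\<bar>)" using 3(1) xy by (intro mult_left_mono) auto
      finally have le: "\<bar>x - y\<bar> \<le> (c * \<bar>2*p - 1\<bar>) * \<bar>x - y\<bar>" by (simp add: algebra_simps)
      show "x = y"
      proof (rule ccontr)
        assume "x \<noteq> y"
        then have "\<bar>x - y\<bar> > 0" by simp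
        then have "(c * \<bar>2*p - 1\<bar>) * \<bar>x - y\<bar> < 1 * \<bar>x - y\<bar>" using 3(2) by (intro mult_strict_right_mono) auto
        with le show False by simp
      qed
    qed
  qed
qed


definition ind :: "bool \<Rightarrow> real" where "ind b = (if b then 1 else 0)"

lemma ind_range[simp]: "0 \<le> ind b" "ind b \<le> 1"
  by (auto simp: ind_def)

locale erw = prob_space M for M :: "'a measure" +
  fixes q p :: real and f :: "real \<Rightarrow> real" and k :: "nat \<Rightarrow> nat"
    and X :: "nat \<Rightarrow> 'a \<Rightarrow> real" and U :: "nat \<Rightarrow> nat \<Rightarrow> 'a \<Rightarrow> nat"
  assumes proc: "erw_process M q p f k X U"
    and prange: "p \<in> {0<..<1}" and frange: "f ` {0..1} \<subseteq> {0..1}"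
    and kb: "\<forall>n\<ge>1. 1 \<le> k n \<and> k n \<le> n"
    and klim: "filterlim k at_top sequentially"
    and fc: "continuous_on {0..1} f"
begin

abbreviation "g \<equiv> erw_g p f"

definition a :: "nat \<Rightarrow> 'a \<Rightarrow> real" where "a n \<omega> = ind (X n \<omega> = 1)"
definition Xv :: "nat \<Rightarrow> 'a \<Rightarrow> real list" where "Xv n \<omega> = map (\<lambda>i. X i \<omega>) [1..<n+1]"
definition V :: "nat \<Rightarrow> real list set" where "V n = {v. set v \<subseteq> {-1,1} \<and> length v = n}"
definition lev :: "nat \<Rightarrow> real list \<Rightarrow> 'a set" where "lev n v = {\<omega>\<in>space M. Xv n \<omega> = v}"
definition L :: "nat \<Rightarrow> nat list set" where "L n = {u. set u \<subseteq> {1..n} \<and> length u = k n}"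
definition W :: "nat \<Rightarrow> nat list \<Rightarrow> 'a set" where "W n u = {\<omega>\<in>space M. erw_Uvec k U n \<omega> = u}"

lemma Xmeas: "X n \<in> measurable M (count_space UNIV)"
  using proc unfolding erw_process_def by blast

lemma Umeas: "n \<ge> 1 \<Longrightarrow> i \<in> {1..k n} \<Longrightarrow> U n i \<in> measurable M (count_space UNIV)"
  using proc unfolding erw_process_def by blast

lemma Xval: "n \<ge> 1 \<Longrightarrow> \<omega> \<in> space M \<Longrightarrow> X n \<omega> \<in> {-1, 1}"
  using proc unfolding erw_process_def by blast

lemma Uval: "n \<ge> 1 \<Longrightarrow> i \<in> {1..k n} \<Longrightarrow> \<omega> \<in> space M \<Longrightarrow> U n i \<omega> \<in> {1..n}"
  using proc unfolding erw_process_def by blast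

lemma X_eq_sets: "{\<omega>\<in>space M. X n \<omega> = c} \<in> sets M"
proof -
  have "X n -` {c} \<inter> space M \<in> sets M" by (rule measurable_sets[OF Xmeas]) simp
  moreover have "X n -` {c} \<inter> space M = {\<omega>\<in>space M. X n \<omega> = c}" by auto
  ultimately show ?thesis by simp
qed

lemma U_eq_sets: "n \<ge> 1 \<Longrightarrow> i \<in> {1..k n} \<Longrightarrow> {\<omega>\<in>space M. U n i \<omega> = c} \<in> sets M"
proof -
  assume a: "n \<ge> 1" "i \<in> {1..k n}"
  have "U n i -` {c} \<inter> space M \<in> sets M" by (rule measurable_sets[OF Umeas[OF a]]) simp
  moreover have "U n i -` {c} \<inter> space M = {\<omega>\<in>space M. U n i \<omega> = c}" by auto
  ultimately show ?thesis by simp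
qed

lemma map_upt_eq_iff:
  "(map h [1..<m+1] = v) \<longleftrightarrow> (length v = m \<and> (\<forall>i\<in>{..<m}. h (Suc i) = v ! i))"
  by (auto simp: list_eq_iff_nth_eq simp del: upt_Suc)

lemma lev_sets: "lev n v \<in> sets M"
proof (cases "length v = n")
  case True
  have "lev n v = {\<omega>\<in>space M. \<forall>i\<in>{..<n}. X (Suc i) \<omega> = v ! i}"
    unfolding lev_def Xv_def map_upt_eq_iff using True by auto
  also have "\<dots> \<in> sets M"
    by (rule sets.sets_Collect_finite_All[OF X_eq_sets]) simp
  finally show ?thesis .
next
  case False
  then have "lev n v = {}" by (auto simp: lev_def Xv_def)
  then show ?thesis by simp
qed

lemma W_sets: "n \<ge> 1 \<Longrightarrow> W n u \<in> sets M"
proof (cases "length u = k n")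
  case True
  assume n: "n \<ge> 1"
  have "W n u = {\<omega>\<in>space M. \<forall>i\<in>{..<k n}. U n (Suc i) \<omega> = u ! i}"
    unfolding W_def erw_Uvec_def map_upt_eq_iff using True by auto
  also have "\<dots> \<in> sets M"
    by (rule sets.sets_Collect_finite_All[OF U_eq_sets[OF n]]) auto
  finally show ?thesis .
next
  case False
  then have "W n u = {}" by (auto simp: W_def erw_Uvec_def)
  then show ?thesis by simp
qed

lemma finite_V: "finite (V n)"
  unfolding V_def by (rule finite_lists_length_eq) simp

lemma finite_L: "finite (L n)"
  unfolding L_def by (rule finite_lists_length_eq) simp

lemma card_L: "card (L n) = n ^ k n"
  unfolding L_def by (subst card_lists_length_eq) simp_all

lemma Xv_V: "\<omega> \<in> space M \<Longrightarrow> Xv n \<omega> \<in> V n"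
proof -
  assume w: "\<omega> \<in> space M"
  have "set (Xv n \<omega>) = (\<lambda>i. X i \<omega>) ` {1..<n+1}" by (simp add: Xv_def del: upt_Suc)
  also have "\<dots> \<subseteq> {-1,1}"
  proof (rule image_subsetI)
    fix i assume "i \<in> {1..<n+1}" then show "X i \<omega> \<in> {-1,1}" by (intro Xval w) auto
  qed
  finally show ?thesis by (simp add: V_def Xv_def del: upt_Suc)
qed

lemma Uvec_L: "n \<ge> 1 \<Longrightarrow> \<omega> \<in> space M \<Longrightarrow> erw_Uvec k U n \<omega> \<in> L n"
proof -
  assume n: "n \<ge> 1" and w: "\<omega> \<in> space M"
  have "set (erw_Uvec k U n \<omega>) = (\<lambda>i. U n i \<omega>) ` {1..<k n+1}" by (simp add: erw_Uvec_def del: upt_Suc)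
  also have "\<dots> \<subseteq> {1..n}"
  proof (rule image_subsetI)
    fix i assume "i \<in> {1..<k n+1}" then show "U n i \<omega> \<in> {1..n}" by (intro Uval n w) auto
  qed
  finally show ?thesis by (simp add: L_def erw_Uvec_def del: upt_Suc)
qed

lemma Xv_meas: "Xv n \<in> measurable M (count_space (V n))"
proof (subst measurable_count_space_eq2[OF finite_V], intro conjI ballI)
  show "Xv n \<in> space M \<rightarrow> V n" using Xv_V by auto
  fix v assume "v \<in> V n"
  have "Xv n -` {v} \<inter> space M = lev n v" by (auto simp: lev_def)
  then show "Xv n -` {v} \<inter> space M \<in> sets M" using lev_sets by simp
qed

lemma Xv_fun_meas: "(\<lambda>\<omega>. \<phi> (Xv n \<omega>) :: real) \<in> borel_measurable M"
  by (rule measurable_compose[OF Xv_meas]) (rule borel_measurable_count_space)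

lemma a_meas: "a n \<in> borel_measurable M"
proof -
  have eq: "a n = (\<lambda>\<omega>. ind (X n \<omega> = 1))" by (rule ext) (simp add: a_def)
  show ?thesis unfolding eq by (rule measurable_compose[OF Xmeas]) simp
qed

end


definition ucnt :: "real list \<Rightarrow> nat list \<Rightarrow> nat" where
  "ucnt v u = card {i\<in>{1..length u}. v ! (u ! (i-1) - 1) = 1}"

lemma ucnt_le: "ucnt v u \<le> length u"
proof -
  have "ucnt v u \<le> card {1..length u}" unfolding ucnt_def by (rule card_mono) auto
  then show ?thesis by simp
qed

context erw begin

definition Bv :: "nat \<Rightarrow> real list \<Rightarrow> real" where
  "Bv n v = (\<Sum>u\<in>L n. g (real (ucnt v u) / real (k n))) / real n ^ k n"
definition B :: "nat \<Rightarrow> 'a \<Rightarrow> real" where "B n \<omega> = Bv n (Xv n \<omega>)"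
definition G :: "nat \<Rightarrow> 'a \<Rightarrow> real" where "G n \<omega> = g (real (erw_C k X U n \<omega>) / real (k n))"
definition \<zeta> :: "nat \<Rightarrow> 'a \<Rightarrow> real" where "\<zeta> n \<omega> = a (Suc n) \<omega> - B n \<omega>"

lemma bounded_int:
  fixes h :: "'a \<Rightarrow> real"
  assumes "h \<in> borel_measurable M" "\<And>\<omega>. \<omega> \<in> space M \<Longrightarrow> \<bar>h \<omega>\<bar> \<le> C"
  shows "integrable M h"
  by (rule integrable_const_bound[where B=C]) (use assms in auto)

lemma g01: "s \<in> {0..1} \<Longrightarrow> g s \<in> {0..1}"
  using g_range(3)[OF prange] frange by blast

lemma Bv_range: assumes n: "n \<ge> 1" shows "0 \<le> Bv n v" "Bv n v \<le> 1"
proof -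
  have kn: "k n \<ge> 1" using kb n by auto
  have gs: "g (real (ucnt v u) / real (k n)) \<in> {0..1}" if "u \<in> L n" for u
  proof (rule g01)
    have "ucnt v u \<le> k n" using ucnt_le[of v u] that by (simp add: L_def)
    then show "real (ucnt v u) / real (k n) \<in> {0..1}" using kn by (auto simp: field_simps)
  qed
  have np: "real n ^ k n > 0" using n by simp
  have "(\<Sum>u\<in>L n. g (real (ucnt v u) / real (k n))) \<ge> 0"
    using gs by (intro sum_nonneg) auto
  then show "0 \<le> Bv n v" using np by (simp add: Bv_def)
  have "(\<Sum>u\<in>L n. g (real (ucnt v u) / real (k n))) \<le> (\<Sum>u\<in>L n. 1)"
    using gs by (intro sum_mono) auto
  also have "\<dots> = real n ^ k n" using card_L by simp
  finally show "Bv n v \<le> 1" using np by (simp add: Bv_def)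
qed

lemma a_range: "0 \<le> a n \<omega>" "a n \<omega> \<le> 1" by (auto simp: a_def)

lemma B_meas: "B n \<in> borel_measurable M"
  unfolding B_def by (rule Xv_fun_meas)

lemma zeta_meas: "\<zeta> n \<in> borel_measurable M"
  unfolding \<zeta>_def by (intro borel_measurable_diff a_meas B_meas)

lemma zeta_bound: "n \<ge> 1 \<Longrightarrow> \<bar>\<zeta> n \<omega>\<bar> \<le> 1"
  using a_range[of "Suc n" \<omega>] Bv_range[of n "Xv n \<omega>"] by (auto simp: \<zeta>_def B_def)

lemma nth_upt1: "i < m \<Longrightarrow> [1..<m+1] ! i = Suc i"
  by (simp del: upt_Suc)

lemma Xv_nth: "m \<in> {1..n} \<Longrightarrow> Xv n \<omega> ! (m - 1) = X m \<omega>"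
  by (auto simp: Xv_def nth_upt1 simp del: upt_Suc)

lemma Uvec_nth: "i \<in> {1..k n} \<Longrightarrow> erw_Uvec k U n \<omega> ! (i - 1) = U n i \<omega>"
  by (auto simp: erw_Uvec_def nth_upt1 simp del: upt_Suc)

lemma C_eq: assumes n: "n \<ge> 1" and w: "\<omega> \<in> space M"
  shows "erw_C k X U n \<omega> = ucnt (Xv n \<omega>) (erw_Uvec k U n \<omega>)"
proof -
  have len: "length (erw_Uvec k U n \<omega>) = k n" by (simp add: erw_Uvec_def del: upt_Suc)
  have "{i\<in>{1..k n}. X (U n i \<omega>) \<omega> = 1} = {i\<in>{1..k n}. Xv n \<omega> ! (erw_Uvec k U n \<omega> ! (i-1) - 1) = 1}"
  proof (intro Collect_cong conj_cong refl)
    fix i assume i: "i \<in> {1..k n}"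
    have "U n i \<omega> \<in> {1..n}" by (rule Uval[OF n i w])
    then show "(X (U n i \<omega>) \<omega> = 1) = (Xv n \<omega> ! (erw_Uvec k U n \<omega> ! (i - 1) - 1) = 1)"
      using Uvec_nth[OF i] Xv_nth by simp
  qed
  then show ?thesis unfolding erw_C_def ucnt_def len by simp
qed

lemma lev_sub: "lev n v \<subseteq> space M" by (auto simp: lev_def)

lemma hist_fst: "fst (erw_hist k X U n \<omega>) = Xv n \<omega>"
  by (simp add: erw_hist_def Xv_def del: upt_Suc)

lemma cond1: assumes n: "n \<ge> 1"
  shows "(\<integral>\<omega>. indicator (lev n v) \<omega> * a (Suc n) \<omega> \<partial>M) = (\<integral>\<omega>. indicator (lev n v) \<omega> * G n \<omega> \<partial>M)"
proof -
  define T :: "((real list \<times> nat list list) \<times> nat list) set" where "T = {(h,u). fst h = v}"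
  have X: "measure M {\<omega>\<in>space M. (erw_hist k X U n \<omega>, erw_Uvec k U n \<omega>) \<in> T \<and> X (Suc n) \<omega> = 1}
          = (LINT \<omega>:{\<omega>\<in>space M. (erw_hist k X U n \<omega>, erw_Uvec k U n \<omega>) \<in> T}|M.
               erw_g p f (real (erw_C k X U n \<omega>) / real (k n)))"
    using proc n unfolding erw_process_def by blast
  have s1: "{\<omega>\<in>space M. (erw_hist k X U n \<omega>, erw_Uvec k U n \<omega>) \<in> T} = lev n v"
    by (auto simp: T_def lev_def hist_fst)
  have s2: "{\<omega>\<in>space M. (erw_hist k X U n \<omega>, erw_Uvec k U n \<omega>) \<in> T \<and> X (Suc n) \<omega> = 1}
      = lev n v \<inter> {\<omega>\<in>space M. X (Suc n) \<omega> = 1}"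
    by (auto simp: T_def lev_def hist_fst)
  have "(\<integral>\<omega>. indicator (lev n v) \<omega> * a (Suc n) \<omega> \<partial>M)
      = (\<integral>\<omega>. indicator (lev n v \<inter> {\<omega>\<in>space M. X (Suc n) \<omega> = 1}) \<omega> \<partial>M)"
    by (intro Bochner_Integration.integral_cong refl) (auto simp: a_def ind_def indicator_def)
  also have "\<dots> = measure M (lev n v \<inter> {\<omega>\<in>space M. X (Suc n) \<omega> = 1})"
    using lev_sub by (simp add: Int_absorb2 inf.coboundedI1)
  also have "\<dots> = (LINT \<omega>:lev n v|M. G n \<omega>)" using X s1 s2 by (simp add: G_def)
  also have "\<dots> = (\<integral>\<omega>. indicator (lev n v) \<omega> * G n \<omega> \<partial>M)"
    by (simp add: set_lebesgue_integral_def)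
  finally show ?thesis .
qed

lemma cond2: assumes n: "n \<ge> 1" and v: "v \<in> V n"
  shows "(\<integral>\<omega>. indicator (lev n v) \<omega> * G n \<omega> \<partial>M) = measure M (lev n v) * Bv n v"
proof -
  define c where "c u = g (real (ucnt v u) / real (k n))" for u
  have pw: "indicator (lev n v) \<omega> * G n \<omega> = (\<Sum>u\<in>L n. c u * indicator (lev n v \<inter> W n u) \<omega>)"
    if w: "\<omega> \<in> space M" for \<omega>
  proof -
    have uL: "erw_Uvec k U n \<omega> \<in> L n" by (rule Uvec_L[OF n w])
    have "(\<Sum>u\<in>L n. c u * indicator (lev n v \<inter> W n u) \<omega>)
        = (\<Sum>u\<in>L n. if erw_Uvec k U n \<omega> = u then c u * indicator (lev n v) \<omega> else 0)"
      by (intro sum.cong refl) (auto simp: W_def w indicator_def)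
    also have "\<dots> = c (erw_Uvec k U n \<omega>) * indicator (lev n v) \<omega>"
      using uL finite_L by (simp add: sum.delta)
    also have "\<dots> = indicator (lev n v) \<omega> * G n \<omega>"
      by (cases "\<omega> \<in> lev n v") (auto simp: c_def G_def C_eq[OF n w] lev_def)
    finally show ?thesis by simp
  qed
  have int: "integrable M (\<lambda>\<omega>. c u * indicator (lev n v \<inter> W n u) \<omega>)" for u
  proof (rule bounded_int[where C="\<bar>c u\<bar>"])
    show "(\<lambda>\<omega>. c u * indicator (lev n v \<inter> W n u) \<omega>) \<in> borel_measurable M"
      by (intro borel_measurable_times borel_measurable_const borel_measurable_indicator sets.Int lev_sets W_sets n)
  qed (auto simp: indicator_def)
  have U: "measure M (lev n v \<inter> W n u) = measure M (lev n v) / real n ^ k n" if u: "u \<in> L n" for u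
  proof -
    have "measure M {\<omega>\<in>space M. erw_hist k X U n \<omega> \<in> {h. fst h = v} \<and> erw_Uvec k U n \<omega> = u}
          = measure M {\<omega>\<in>space M. erw_hist k X U n \<omega> \<in> {h. fst h = v}} / real n ^ k n"
      using proc n u unfolding erw_process_def L_def by blast
    moreover have "{\<omega>\<in>space M. erw_hist k X U n \<omega> \<in> {h. fst h = v} \<and> erw_Uvec k U n \<omega> = u} = lev n v \<inter> W n u"
      by (auto simp: lev_def W_def hist_fst)
    moreover have "{\<omega>\<in>space M. erw_hist k X U n \<omega> \<in> {h. fst h = v}} = lev n v"
      by (auto simp: lev_def hist_fst)
    ultimately show ?thesis by simp
  qed
  have "(\<integral>\<omega>. indicator (lev n v) \<omega> * G n \<omega> \<partial>M) = (\<integral>\<omega>. (\<Sum>u\<in>L n. c u * indicator (lev n v \<inter> W n u) \<omega>) \<partial>M)"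
    by (intro Bochner_Integration.integral_cong refl pw)
  also have "\<dots> = (\<Sum>u\<in>L n. (\<integral>\<omega>. c u * indicator (lev n v \<inter> W n u) \<omega> \<partial>M))"
    by (rule Bochner_Integration.integral_sum) (rule int)
  also have "\<dots> = (\<Sum>u\<in>L n. c u * measure M (lev n v \<inter> W n u))"
  proof (intro sum.cong refl)
    fix u
    have "lev n v \<inter> W n u \<inter> space M = lev n v \<inter> W n u" using lev_sub by auto
    then show "(\<integral>\<omega>. c u * indicator (lev n v \<inter> W n u) \<omega> \<partial>M) = c u * measure M (lev n v \<inter> W n u)"
      by simp
  qed
  also have "\<dots> = (\<Sum>u\<in>L n. c u * (measure M (lev n v) / real n ^ k n))"
    by (intro sum.cong refl) (simp add: U)
  also have "\<dots> = measure M (lev n v) * Bv n v"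
  proof -
    have "(\<Sum>u\<in>L n. c u * (measure M (lev n v) / real n ^ k n))
        = measure M (lev n v) * (\<Sum>u\<in>L n. c u) / real n ^ k n"
      by (simp add: sum_distrib_right[symmetric] sum_divide_distrib[symmetric] algebra_simps)
    then show ?thesis by (simp add: Bv_def c_def)
  qed
  finally show ?thesis .
qed

lemma cond3: "(\<integral>\<omega>. indicator (lev n v) \<omega> * B n \<omega> \<partial>M) = measure M (lev n v) * Bv n v"
proof -
  have "(\<integral>\<omega>. indicator (lev n v) \<omega> * B n \<omega> \<partial>M) = (\<integral>\<omega>. Bv n v * indicator (lev n v) \<omega> \<partial>M)"
    by (intro Bochner_Integration.integral_cong refl) (auto simp: indicator_def B_def lev_def)
  also have "\<dots> = measure M (lev n v) * Bv n v"
    using lev_sub by (simp add: Int_absorb2)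
  finally show ?thesis .
qed

lemma ortho: assumes n: "n \<ge> 1"
  shows "(\<integral>\<omega>. \<phi> (Xv n \<omega>) * \<zeta> n \<omega> \<partial>M) = 0"
proof -
  have pw: "\<phi> (Xv n \<omega>) * \<zeta> n \<omega> = (\<Sum>v\<in>V n. \<phi> v * (indicator (lev n v) \<omega> * a (Suc n) \<omega> - indicator (lev n v) \<omega> * B n \<omega>))"
    if w: "\<omega> \<in> space M" for \<omega>
  proof -
    have "(\<Sum>v\<in>V n. \<phi> v * (indicator (lev n v) \<omega> * a (Suc n) \<omega> - indicator (lev n v) \<omega> * B n \<omega>))
       = (\<Sum>v\<in>V n. if Xv n \<omega> = v then \<phi> v * \<zeta> n \<omega> else 0)"
      by (intro sum.cong refl) (auto simp: lev_def w \<zeta>_def indicator_def)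
    also have "\<dots> = \<phi> (Xv n \<omega>) * \<zeta> n \<omega>" using Xv_V[OF w] finite_V by (simp add: sum.delta)
    finally show ?thesis by simp
  qed
  have ia: "integrable M (\<lambda>\<omega>. indicator (lev n v) \<omega> * a (Suc n) \<omega>)" for v
  proof (rule bounded_int[where C=1])
    show "(\<lambda>\<omega>. indicator (lev n v) \<omega> * a (Suc n) \<omega>) \<in> borel_measurable M"
      by (intro borel_measurable_times a_meas borel_measurable_indicator lev_sets)
  qed (auto simp: indicator_def a_def ind_def)
  have ib: "integrable M (\<lambda>\<omega>. indicator (lev n v) \<omega> * B n \<omega>)" for v
  proof (rule bounded_int[where C=1])
    show "(\<lambda>\<omega>. indicator (lev n v) \<omega> * B n \<omega>) \<in> borel_measurable M"
      by (intro borel_measurable_times B_meas borel_measurable_indicator lev_sets)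
    fix \<omega> show "\<bar>indicator (lev n v) \<omega> * B n \<omega>\<bar> \<le> 1"
      using Bv_range[OF n, of "Xv n \<omega>"] by (auto simp: indicator_def B_def)
  qed
  have "(\<integral>\<omega>. \<phi> (Xv n \<omega>) * \<zeta> n \<omega> \<partial>M)
      = (\<integral>\<omega>. (\<Sum>v\<in>V n. \<phi> v * (indicator (lev n v) \<omega> * a (Suc n) \<omega> - indicator (lev n v) \<omega> * B n \<omega>)) \<partial>M)"
    by (intro Bochner_Integration.integral_cong refl pw)
  also have "\<dots> = (\<Sum>v\<in>V n. \<phi> v * ((\<integral>\<omega>. indicator (lev n v) \<omega> * a (Suc n) \<omega> \<partial>M) - (\<integral>\<omega>. indicator (lev n v) \<omega> * B n \<omega> \<partial>M)))"
    by (subst Bochner_Integration.integral_sum)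
       (auto intro!: integrable_mult_right Bochner_Integration.integrable_diff ia ib
        simp: Bochner_Integration.integral_diff[OF ia ib])
  also have "\<dots> = 0"
    by (intro sum.neutral ballI) (simp add: cond1[OF n] cond2[OF n] cond3)
  finally show ?thesis .
qed

end


lemma quartic:
  fixes s z :: real assumes z: "\<bar>z\<bar> \<le> 1"
  shows "(s + z)^4 \<le> s^4 + 4 * (s^3 * z) + 8 * s^2 + 3"
proof -
  have za: "\<bar>z\<bar> ^ m \<le> 1" for m :: nat using z by (intro power_le_one) auto
  have z2: "z^2 \<le> 1" using za[of 2] by (simp add: power_abs)
  have z3: "\<bar>z^3\<bar> \<le> 1" using za[of 3] by (simp add: power_abs)
  have z4: "z^4 \<le> 1" using za[of 4] by (simp add: power_abs)
  have e: "(s + z)^4 = s^4 + 4 * (s^3 * z) + 6 * (s^2 * z^2) + 4 * (s * z^3) + z^4"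
    by algebra
  have t1: "s^2 * z^2 \<le> s^2" using z2 by (simp add: mult_left_le)
  have t2: "s * z^3 \<le> \<bar>s\<bar>"
  proof -
    have "s * z^3 \<le> \<bar>s * z^3\<bar>" by simp
    also have "\<dots> = \<bar>s\<bar> * \<bar>z^3\<bar>" by (simp add: abs_mult)
    also have "\<dots> \<le> \<bar>s\<bar>" using z3 by (simp add: mult_left_le)
    finally show ?thesis .
  qed
  have t3: "2 * \<bar>s\<bar> \<le> s^2 + 1"
  proof -
    have "0 \<le> (\<bar>s\<bar> - 1)^2" by simp
    then show ?thesis by (simp add: power2_eq_square algebra_simps)
  qed
  show ?thesis using e t1 t2 t3 z4 by linarith
qed

lemma quadratic:
  fixes s z :: real assumes z: "\<bar>z\<bar> \<le> 1"
  shows "(s + z)^2 \<le> s^2 + 2 * (s * z) + 1"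
proof -
  have "\<bar>z\<bar> ^ 2 \<le> 1" using z by (intro power_le_one) auto
  then have z2: "z^2 \<le> 1" by (simp add: power_abs)
  have "(s + z)^2 = s^2 + 2 * (s * z) + z^2" by (simp add: power2_eq_square algebra_simps)
  then show ?thesis using z2 by linarith
qed

context erw begin

definition Sv :: "nat \<Rightarrow> real list \<Rightarrow> real" where
  "Sv n v = (\<Sum>j\<in>{1..<n}. ind (v ! j = 1) - Bv j (take j v))"
definition Sm :: "nat \<Rightarrow> 'a \<Rightarrow> real" where
  "Sm n \<omega> = (\<Sum>j\<in>{1..<n}. \<zeta> j \<omega>)"

lemma take_Xv: "j \<le> n \<Longrightarrow> take j (Xv n \<omega>) = Xv j \<omega>"
  by (simp add: Xv_def take_map take_upt del: upt_Suc)

lemma Sm_eq: "Sm n \<omega> = Sv n (Xv n \<omega>)"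
  unfolding Sm_def Sv_def
proof (intro sum.cong refl)
  fix j assume j: "j \<in> {1..<n}"
  have "Xv n \<omega> ! j = X (Suc j) \<omega>" using Xv_nth[of "Suc j" n \<omega>] j by simp
  then show "\<zeta> j \<omega> = ind (Xv n \<omega> ! j = 1) - Bv j (take j (Xv n \<omega>))"
    using j by (simp add: \<zeta>_def a_def B_def take_Xv)
qed

lemma Sm_meas: "Sm n \<in> borel_measurable M"
proof -
  have "Sm n = (\<lambda>\<omega>. Sv n (Xv n \<omega>))" by (rule ext) (rule Sm_eq)
  then show ?thesis using Xv_fun_meas by simp
qed

lemma Sm_bound: "\<bar>Sm n \<omega>\<bar> \<le> real n"
proof -
  have "\<bar>Sm n \<omega>\<bar> \<le> (\<Sum>j\<in>{1..<n}. \<bar>\<zeta> j \<omega>\<bar>)" unfolding Sm_def by (rule sum_abs)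
  also have "\<dots> \<le> (\<Sum>j\<in>{1..<n}. 1)" by (intro sum_mono zeta_bound) auto
  also have "\<dots> \<le> real n" by simp
  finally show ?thesis .
qed

lemma Sm_Suc: "n \<ge> 1 \<Longrightarrow> Sm (Suc n) \<omega> = Sm n \<omega> + \<zeta> n \<omega>"
  unfolding Sm_def by (simp add: sum.atLeastLessThan_Suc)

lemma Sm_1: "Sm 1 \<omega> = 0" by (simp add: Sm_def)

lemma int_bdd: assumes n: "n \<ge> 1" shows "integrable M (\<lambda>\<omega>. Sm n \<omega> ^ m * \<zeta> n \<omega> ^ l)"
proof (rule bounded_int[where C="real n ^ m * 1"])
  show "(\<lambda>\<omega>. Sm n \<omega> ^ m * \<zeta> n \<omega> ^ l) \<in> borel_measurable M"
    by (intro borel_measurable_times borel_measurable_power Sm_meas zeta_meas)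
  fix \<omega> assume "\<omega> \<in> space M"
  have "\<bar>\<zeta> n \<omega>\<bar> ^ l \<le> 1" using zeta_bound[OF n, of \<omega>] by (intro power_le_one) auto
  then have "\<bar>\<zeta> n \<omega> ^ l\<bar> \<le> 1" by (simp add: power_abs)
  moreover have "\<bar>Sm n \<omega>\<bar> ^ m \<le> real n ^ m" using Sm_bound by (intro power_mono) auto
  then have "\<bar>Sm n \<omega> ^ m\<bar> \<le> real n ^ m" by (simp add: power_abs)
  ultimately show "\<bar>Sm n \<omega> ^ m * \<zeta> n \<omega> ^ l\<bar> \<le> real n ^ m * 1"
    unfolding abs_mult by (intro mult_mono) auto
qed

lemma int_pow: "integrable M (\<lambda>\<omega>. Sm n \<omega> ^ m)"
proof (rule bounded_int[where C="real n ^ m"])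
  show "(\<lambda>\<omega>. Sm n \<omega> ^ m) \<in> borel_measurable M"
    by (intro borel_measurable_power Sm_meas)
  fix \<omega> assume "\<omega> \<in> space M"
  have "\<bar>Sm n \<omega>\<bar> ^ m \<le> real n ^ m" using Sm_bound by (intro power_mono) auto
  then show "\<bar>Sm n \<omega> ^ m\<bar> \<le> real n ^ m" by (simp add: power_abs)
qed

lemma ortho_pow: "n \<ge> 1 \<Longrightarrow> (\<integral>\<omega>. Sm n \<omega> ^ m * \<zeta> n \<omega> \<partial>M) = 0"
  using ortho[of n "\<lambda>v. Sv n v ^ m"] by (simp add: Sm_eq)

lemma E2_step: assumes n: "n \<ge> 1"
  shows "(\<integral>\<omega>. Sm (Suc n) \<omega> ^ 2 \<partial>M) \<le> (\<integral>\<omega>. Sm n \<omega> ^ 2 \<partial>M) + 1"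
proof -
  have "(\<integral>\<omega>. Sm (Suc n) \<omega> ^ 2 \<partial>M) \<le> (\<integral>\<omega>. Sm n \<omega> ^ 2 + 2 * (Sm n \<omega> ^ 1 * \<zeta> n \<omega> ^ 1) + 1 \<partial>M)"
  proof (rule integral_mono)
    show "integrable M (\<lambda>\<omega>. Sm (Suc n) \<omega> ^ 2)" by (rule int_pow)
    show "integrable M (\<lambda>\<omega>. Sm n \<omega> ^ 2 + 2 * (Sm n \<omega> ^ 1 * \<zeta> n \<omega> ^ 1) + 1)"
      by (intro Bochner_Integration.integrable_add integrable_mult_right int_pow int_bdd[OF n] integrable_const)
    fix \<omega> assume "\<omega> \<in> space M"
    show "Sm (Suc n) \<omega> ^ 2 \<le> Sm n \<omega> ^ 2 + 2 * (Sm n \<omega> ^ 1 * \<zeta> n \<omega> ^ 1) + 1"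
      using quadratic[OF zeta_bound[OF n, of \<omega>], of "Sm n \<omega>"] by (simp add: Sm_Suc[OF n])
  qed
  also have "\<dots> = (\<integral>\<omega>. Sm n \<omega> ^ 2 \<partial>M) + 2 * (\<integral>\<omega>. Sm n \<omega> ^ 1 * \<zeta> n \<omega> ^ 1 \<partial>M) + 1"
    by (subst Bochner_Integration.integral_add; (intro Bochner_Integration.integrable_add integrable_mult_right int_pow int_bdd[OF n] integrable_const)?)
       (subst Bochner_Integration.integral_add; (intro integrable_mult_right int_pow int_bdd[OF n])?; simp add: prob_space)
  also have "\<dots> = (\<integral>\<omega>. Sm n \<omega> ^ 2 \<partial>M) + 1" using ortho_pow[OF n, of 1] by simp
  finally show ?thesis .
qed

lemma E4_step: assumes n: "n \<ge> 1"
  shows "(\<integral>\<omega>. Sm (Suc n) \<omega> ^ 4 \<partial>M) \<le> (\<integral>\<omega>. Sm n \<omega> ^ 4 \<partial>M) + 8 * (\<integral>\<omega>. Sm n \<omega> ^ 2 \<partial>M) + 3"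
proof -
  have "(\<integral>\<omega>. Sm (Suc n) \<omega> ^ 4 \<partial>M) \<le> (\<integral>\<omega>. Sm n \<omega> ^ 4 + 4 * (Sm n \<omega> ^ 3 * \<zeta> n \<omega> ^ 1) + 8 * Sm n \<omega> ^ 2 + 3 \<partial>M)"
  proof (rule integral_mono)
    show "integrable M (\<lambda>\<omega>. Sm (Suc n) \<omega> ^ 4)" by (rule int_pow)
    show "integrable M (\<lambda>\<omega>. Sm n \<omega> ^ 4 + 4 * (Sm n \<omega> ^ 3 * \<zeta> n \<omega> ^ 1) + 8 * Sm n \<omega> ^ 2 + 3)"
      by (intro Bochner_Integration.integrable_add integrable_mult_right int_pow int_bdd[OF n] integrable_const)
    fix \<omega> assume "\<omega> \<in> space M"
    show "Sm (Suc n) \<omega> ^ 4 \<le> Sm n \<omega> ^ 4 + 4 * (Sm n \<omega> ^ 3 * \<zeta> n \<omega> ^ 1) + 8 * Sm n \<omega> ^ 2 + 3"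
      using quartic[OF zeta_bound[OF n, of \<omega>], of "Sm n \<omega>"] by (simp add: Sm_Suc[OF n])
  qed
  also have "\<dots> = (\<integral>\<omega>. Sm n \<omega> ^ 4 \<partial>M) + 4 * (\<integral>\<omega>. Sm n \<omega> ^ 3 * \<zeta> n \<omega> ^ 1 \<partial>M) + 8 * (\<integral>\<omega>. Sm n \<omega> ^ 2 \<partial>M) + 3"
    by (subst Bochner_Integration.integral_add; (intro Bochner_Integration.integrable_add integrable_mult_right int_pow int_bdd[OF n] integrable_const)?)
       (subst Bochner_Integration.integral_add; (intro Bochner_Integration.integrable_add integrable_mult_right int_pow int_bdd[OF n])?;
        subst Bochner_Integration.integral_add; (intro integrable_mult_right int_pow int_bdd[OF n])?; simp add: prob_space)
  also have "\<dots> = (\<integral>\<omega>. Sm n \<omega> ^ 4 \<partial>M) + 8 * (\<integral>\<omega>. Sm n \<omega> ^ 2 \<partial>M) + 3" using ortho_pow[OF n, of 3] by simp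
  finally show ?thesis .
qed

lemma E_bounds: "n \<ge> 1 \<Longrightarrow> (\<integral>\<omega>. Sm n \<omega> ^ 2 \<partial>M) \<le> real n \<and> (\<integral>\<omega>. Sm n \<omega> ^ 4 \<partial>M) \<le> 8 * real n ^ 2"
proof (induction n rule: dec_induct)
  case base then show ?case by (simp add: Sm_def)
next
  case (step n)
  have n: "n \<ge> 1" using step by simp
  have a: "(\<integral>\<omega>. Sm (Suc n) \<omega> ^ 2 \<partial>M) \<le> real (Suc n)" using E2_step[OF n] step.IH by simp
  have "(\<integral>\<omega>. Sm (Suc n) \<omega> ^ 4 \<partial>M) \<le> 8 * real n ^ 2 + 8 * real n + 3" using E4_step[OF n] step.IH by simp
  also have "\<dots> \<le> 8 * real (Suc n) ^ 2" by (simp add: power2_eq_square algebra_simps)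
  finally show ?case using a by simp
qed

end

context erw begin

lemma Sm_tail: assumes m: "(m::nat) \<ge> 0"
  shows "AE \<omega> in M. eventually (\<lambda>n. \<bar>Sm n \<omega>\<bar> < real n / real (Suc m)) sequentially"
proof -
  define \<epsilon> :: real where "\<epsilon> = 1 / real (Suc m)"
  have ep: "\<epsilon> > 0" by (simp add: \<epsilon>_def)
  define A where "A n = {\<omega>\<in>space M. (\<epsilon> * real n) ^ 4 \<le> Sm n \<omega> ^ 4}" for n
  have Asets: "A n \<in> sets M" for n
    unfolding A_def by (intro borel_measurable_le borel_measurable_const borel_measurable_power Sm_meas)
      
  have Ale: "measure M (A n) \<le> 8 * real (Suc m) ^ 4 * inverse (real n ^ 2)" if n: "n \<ge> 1" for n
  proof -
    have c: "(\<epsilon> * real n) ^ 4 > 0" using ep n by simp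
    have "measure M (A n) \<le> (\<integral>\<omega>. Sm n \<omega> ^ 4 \<partial>M) / (\<epsilon> * real n) ^ 4"
      unfolding A_def
      by (rule integral_Markov_inequality_measure[OF int_pow sets.top _ c]) (simp add: zero_le_even_power)
    also have "\<dots> \<le> 8 * real n ^ 2 / (\<epsilon> * real n) ^ 4"
      using E_bounds[OF n] c by (intro divide_right_mono) auto
    also have "\<dots> = 8 * real (Suc m) ^ 4 * inverse (real n ^ 2)"
      using n by (simp add: \<epsilon>_def field_simps power_mult_distrib eval_nat_numeral)
    finally show ?thesis .
  qed
  have summ: "summable (\<lambda>n. measure M (A n))"
  proof (rule summable_comparison_test')
    show "summable (\<lambda>n. 8 * real (Suc m) ^ 4 * inverse (real n ^ 2))"
      by (intro summable_mult inverse_power_summable) simp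
    fix n :: nat assume "n \<ge> 1"
    then show "norm (measure M (A n)) \<le> 8 * real (Suc m) ^ 4 * inverse (real n ^ 2)"
      using Ale by simp
  qed
  have "AE \<omega> in M. eventually (\<lambda>n. \<omega> \<in> space M - A n) sequentially"
    by (rule borel_cantelli_AE1[OF Asets _ summ]) (simp add: less_top[symmetric])
  then show ?thesis
  proof (rule AE_mp, intro AE_I2 impI)
    fix \<omega> assume w: "\<omega> \<in> space M" and ev: "eventually (\<lambda>n. \<omega> \<in> space M - A n) sequentially"
    from ev show "eventually (\<lambda>n. \<bar>Sm n \<omega>\<bar> < real n / real (Suc m)) sequentially"
    proof (rule eventually_mono)
      fix n assume "\<omega> \<in> space M - A n"
      then have "Sm n \<omega> ^ 4 < (\<epsilon> * real n) ^ 4" using w by (auto simp: A_def)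
      then have "\<bar>Sm n \<omega>\<bar> ^ 4 < (\<epsilon> * real n) ^ 4" by (simp add: power_even_abs)
      then have "\<bar>Sm n \<omega>\<bar> < \<epsilon> * real n" by (rule power_less_imp_less_base) (use ep in simp)
      then show "\<bar>Sm n \<omega>\<bar> < real n / real (Suc m)" by (simp add: \<epsilon>_def)
    qed
  qed
qed

lemma Sm_as: "AE \<omega> in M. (\<lambda>n. Sm n \<omega> / real n) \<longlonglongrightarrow> 0"
proof -
  have "AE \<omega> in M. \<forall>m. eventually (\<lambda>n. \<bar>Sm n \<omega>\<bar> < real n / real (Suc m)) sequentially"
    using Sm_tail by (subst AE_all_countable) auto
  then show ?thesis
  proof (rule AE_mp, intro AE_I2 impI)
    fix \<omega> assume H: "\<forall>m. eventually (\<lambda>n. \<bar>Sm n \<omega>\<bar> < real n / real (Suc m)) sequentially"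
    show "(\<lambda>n. Sm n \<omega> / real n) \<longlonglongrightarrow> 0"
      unfolding tendsto_iff dist_real_def
    proof (intro allI impI)
      fix r :: real assume r: "r > 0"
      obtain m :: nat where m: "1 / r < real m" using reals_Archimedean2 by blast
      have mr: "1 / real (Suc m) < r"
      proof -
        have "1 / r < real (Suc m)" using m by simp
        then show ?thesis using r by (simp add: field_simps)
      qed
      from H[rule_format, of m] eventually_gt_at_top[of 0]
      show "eventually (\<lambda>n. \<bar>Sm n \<omega> / real n - 0\<bar> < r) sequentially"
      proof (eventually_elim)
        case (elim n)
        then have "\<bar>Sm n \<omega>\<bar> / real n < 1 / real (Suc m)" by (simp add: field_simps)
        with mr show ?case by (simp add: abs_divide)
      qed
    qed
  qed
qed

end


lemma list_var:
  fixes d :: "nat \<Rightarrow> real" assumes fin: "finite A" and s0: "(\<Sum>x\<in>A. d x) = 0"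
  shows "(\<Sum>u\<in>{u. set u \<subseteq> A \<and> length u = m}. (sum_list (map d u))^2) * real (card A)
        = real m * real (card A) ^ m * (\<Sum>x\<in>A. d x ^ 2)"
proof (induction m)
  case 0
  have "{u. set u \<subseteq> A \<and> length u = 0} = {[]}" by auto
  then show ?case by simp
next
  case (Suc m)
  let ?L = "{u. set u \<subseteq> A \<and> length u = m}"
  let ?D = "\<lambda>u. sum_list (map d u)"
  have inj: "inj_on (\<lambda>(xs, x). x # xs) (?L \<times> A)" by (auto simp: inj_on_def)
  have "(\<Sum>u\<in>{u. set u \<subseteq> A \<and> length u = Suc m}. (?D u)^2)
      = (\<Sum>(xs, x)\<in>?L \<times> A. (?D (x # xs))^2)"
    unfolding lists_length_Suc_eq by (subst sum.reindex[OF inj]) (simp add: case_prod_unfold)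
  also have "\<dots> = (\<Sum>xs\<in>?L. \<Sum>x\<in>A. (d x + ?D xs)^2)"
    by (subst sum.cartesian_product[symmetric]) simp
  also have "\<dots> = (\<Sum>xs\<in>?L. (\<Sum>x\<in>A. d x ^ 2) + 2 * ?D xs * (\<Sum>x\<in>A. d x) + real (card A) * (?D xs)^2)"
    by (intro sum.cong refl) (simp add: power2_eq_square algebra_simps sum.distrib sum_distrib_left sum_distrib_right)
  also have "\<dots> = real (card ?L) * (\<Sum>x\<in>A. d x ^ 2) + real (card A) * (\<Sum>xs\<in>?L. (?D xs)^2)"
    by (simp add: s0 sum.distrib sum_distrib_left)
  finally have e: "(\<Sum>u\<in>{u. set u \<subseteq> A \<and> length u = Suc m}. (?D u)^2)
      = real (card A) ^ m * (\<Sum>x\<in>A. d x ^ 2) + real (card A) * (\<Sum>xs\<in>?L. (?D xs)^2)"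
    using card_lists_length_eq[OF fin, of m] by simp
  show ?case
    unfolding e using Suc.IH by (simp add: algebra_simps)
qed

lemma card_filter_sum: "real (card {i\<in>{1..l}. P i}) = (\<Sum>i<l. ind (P (Suc i)))"
proof -
  have "real (card {i\<in>{1..l}. P i}) = (\<Sum>i\<in>{i\<in>{1..l}. P i}. 1)" by simp
  also have "\<dots> = (\<Sum>i\<in>{1..l}. if P i then 1 else 0)" by (rule sum.inter_filter) simp
  also have "\<dots> = (\<Sum>i\<in>{Suc 0..l}. ind (P i))" by (simp add: ind_def)
  also have "\<dots> = (\<Sum>i<l. ind (P (Suc i)))" by (rule sum.atLeast1_atMost_eq)
  finally show ?thesis .
qed

context erw begin

definition Yv :: "nat \<Rightarrow> real list \<Rightarrow> real" where
  "Yv n v = (\<Sum>m\<in>{1..n}. ind (v ! (m - 1) = 1)) / real n"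

lemma Yv_range: "Yv n v \<in> {0..1}"
proof -
  have "(\<Sum>m\<in>{1..n}. ind (v ! (m - 1) = 1)) \<le> (\<Sum>m\<in>{1..n}. 1)" by (intro sum_mono) simp
  moreover have "(\<Sum>m\<in>{1..n}. ind (v ! (m - 1) = 1)) \<ge> 0" by (intro sum_nonneg) simp
  ultimately show ?thesis by (cases "n = 0") (auto simp: Yv_def field_simps)
qed

lemma ucnt_sum: "real (ucnt v u) = sum_list (map (\<lambda>m. ind (v ! (m - 1) = 1)) u)"
  unfolding ucnt_def card_filter_sum by (simp add: sum_list_sum_nth atLeast0LessThan)

lemma bias_pt:
  assumes n: "n \<ge> 1" and dpos: "\<delta> > 0"
    and uc: "\<forall>s\<in>{0..1}. \<forall>t\<in>{0..1}. \<bar>s - t\<bar> < \<delta> \<longrightarrow> \<bar>g s - g t\<bar> < \<epsilon>"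
  shows "\<bar>Bv n v - g (Yv n v)\<bar> \<le> \<epsilon> + 1 / (\<delta>^2 * real (k n))"
proof -
  have kn: "k n \<ge> 1" using kb n by auto
  define Y where "Y = Yv n v"
  define c where "c m = ind (v ! (m - 1) = 1)" for m
  define d where "d m = c m - Y" for m
  have Y01: "Y \<in> {0..1}" using Yv_range by (simp add: Y_def)
  have s0: "(\<Sum>m\<in>{1..n}. d m) = 0"
    using n by (simp add: d_def c_def Y_def Yv_def sum_subtractf)
  have dsq: "(\<Sum>m\<in>{1..n}. d m ^ 2) \<le> real n"
  proof -
    have "(\<Sum>m\<in>{1..n}. d m ^ 2) \<le> (\<Sum>m\<in>{1..n}. 1)"
    proof (intro sum_mono)
      fix m
      have "\<bar>d m\<bar> \<le> 1" using Y01 by (auto simp: d_def c_def ind_def)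
      then have "\<bar>d m\<bar> ^ 2 \<le> 1" by (intro power_le_one) auto
      then show "d m ^ 2 \<le> 1" by (simp add: power_abs)
    qed
    then show ?thesis by simp
  qed
  define s where "s u = real (ucnt v u) / real (k n)" for u
  have s_eq: "s u - Y = sum_list (map d u) / real (k n)" if u: "u \<in> L n" for u
  proof -
    have lu: "length u = k n" using u by (simp add: L_def)
    have dd: "d = (\<lambda>m. c m - Y)" by (simp add: fun_eq_iff d_def)
    have "sum_list (map d u) = sum_list (map c u) - real (length u) * Y"
      unfolding dd by (simp add: sum_list_subtractf sum_list_triv)
    moreover have cc: "(\<lambda>m. ind (v ! (m - 1) = 1)) = c" by (simp add: fun_eq_iff c_def)
    ultimately show ?thesis using kn lu by (simp add: s_def ucnt_sum cc field_simps)
  qed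
  have s01: "s u \<in> {0..1}" if u: "u \<in> L n" for u
  proof -
    have "ucnt v u \<le> k n" using ucnt_le[of v u] u by (simp add: L_def)
    then show ?thesis using kn by (auto simp: s_def field_simps)
  qed
  have var: "(\<Sum>u\<in>L n. (sum_list (map d u))^2) * real n = real (k n) * real n ^ k n * (\<Sum>m\<in>{1..n}. d m ^ 2)"
    using list_var[of "{1..n}" d "k n"] s0 by (simp add: L_def)
  have var2: "(\<Sum>u\<in>L n. (s u - Y)^2) \<le> real n ^ k n / real (k n)"
  proof -
    have "(\<Sum>u\<in>L n. (s u - Y)^2) = (\<Sum>u\<in>L n. (sum_list (map d u))^2) / real (k n) ^ 2"
      by (simp add: s_eq power_divide sum_divide_distrib)
    also have "(\<Sum>u\<in>L n. (sum_list (map d u))^2) \<le> real (k n) * real n ^ k n"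
    proof -
      have "(\<Sum>u\<in>L n. (sum_list (map d u))^2) * real n \<le> real (k n) * real n ^ k n * real n"
        unfolding var by (intro mult_left_mono dsq) auto
      then show ?thesis using n by simp
    qed
    then have "(\<Sum>u\<in>L n. (sum_list (map d u))^2) / real (k n) ^ 2 \<le> real (k n) * real n ^ k n / real (k n) ^ 2"
      by (intro divide_right_mono) auto
    also have "\<dots> = real n ^ k n / real (k n)" using kn by (simp add: power2_eq_square)
    finally show ?thesis .
  qed
  have pt: "\<bar>g (s u) - g Y\<bar> \<le> \<epsilon> + (s u - Y)^2 / \<delta>^2" if u: "u \<in> L n" for u
  proof (cases "\<bar>s u - Y\<bar> < \<delta>")
    case True
    then have "\<bar>g (s u) - g Y\<bar> < \<epsilon>" using uc s01[OF u] Y01 by blast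
    moreover have "(s u - Y)^2 / \<delta>^2 \<ge> 0" by simp
    ultimately show ?thesis by linarith
  next
    case False
    then have "\<delta>^2 \<le> \<bar>s u - Y\<bar>^2" using dpos by (intro power_mono) auto
    then have "1 \<le> (s u - Y)^2 / \<delta>^2" using dpos by (simp add: power_abs field_simps)
    moreover have "\<bar>g (s u) - g Y\<bar> \<le> 1" using g01[OF s01[OF u]] g01[OF Y01] by auto
    moreover have "\<epsilon> > 0" using uc[rule_format, of 0 0] dpos by simp
    ultimately show ?thesis by linarith
  qed
  have np: "real n ^ k n > 0" using n by simp
  have cardL: "real (card (L n)) = real n ^ k n" by (simp add: card_L)
  have "(\<Sum>u\<in>L n. g (s u) - g Y) = (\<Sum>u\<in>L n. g (s u)) - real n ^ k n * g Y"
    by (simp add: sum_subtractf cardL)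
  then have "(\<Sum>u\<in>L n. g (s u) - g Y) / real n ^ k n = (\<Sum>u\<in>L n. g (s u)) / real n ^ k n - g Y"
    using np by (simp add: diff_divide_distrib)
  then have "Bv n v - g Y = (\<Sum>u\<in>L n. g (s u) - g Y) / real n ^ k n"
    by (simp add: Bv_def s_def)
  then have "\<bar>Bv n v - g Y\<bar> \<le> (\<Sum>u\<in>L n. \<bar>g (s u) - g Y\<bar>) / real n ^ k n"
    using np by (simp add: abs_divide) (intro divide_right_mono sum_abs, auto)
  also have "\<dots> \<le> (\<Sum>u\<in>L n. \<epsilon> + (s u - Y)^2 / \<delta>^2) / real n ^ k n"
    using np by (intro divide_right_mono sum_mono pt) auto
  also have "\<dots> = \<epsilon> + (\<Sum>u\<in>L n. (s u - Y)^2) / (\<delta>^2 * real n ^ k n)"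
  proof -
    have "(\<Sum>u\<in>L n. \<epsilon> + (s u - Y)^2 / \<delta>^2) = real n ^ k n * \<epsilon> + (\<Sum>u\<in>L n. (s u - Y)^2) / \<delta>^2"
      by (simp add: sum.distrib cardL sum_divide_distrib)
    then show ?thesis using np dpos by (simp add: add_divide_distrib)
  qed
  also have "\<dots> \<le> \<epsilon> + (real n ^ k n / real (k n)) / (\<delta>^2 * real n ^ k n)"
    using var2 np dpos by (intro add_left_mono divide_right_mono) auto
  also have "\<dots> = \<epsilon> + 1 / (\<delta>^2 * real (k n))"
  proof -
    have "real (k n) > 0" using kn by simp
    then show ?thesis using np dpos by (simp add: field_simps)
  qed
  finally show ?thesis by (simp add: Y_def)
qed

lemma bias: assumes ep: "\<epsilon> > 0"
  shows "eventually (\<lambda>n. \<forall>v. \<bar>Bv n v - g (Yv n v)\<bar> \<le> 2 * \<epsilon>) sequentially"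
proof -
  have "uniformly_continuous_on {0..1} g"
    by (rule compact_uniformly_continuous[OF g_cont[OF fc]]) simp
  then obtain \<delta> where dpos: "\<delta> > 0" and d: "\<forall>s\<in>{0..1}. \<forall>t\<in>{0..1}. dist s t < \<delta> \<longrightarrow> dist (g s) (g t) < \<epsilon>"
    unfolding uniformly_continuous_on_def using ep by metis
  have uc: "\<forall>s\<in>{0..1}. \<forall>t\<in>{0..1}. \<bar>s - t\<bar> < \<delta> \<longrightarrow> \<bar>g s - g t\<bar> < \<epsilon>"
    using d by (simp add: dist_real_def)
  obtain Z :: nat where Z: "real Z \<ge> 1 / (\<delta>^2 * \<epsilon>)" using real_arch_simple by blast
  have evk: "eventually (\<lambda>n. Z \<le> k n) sequentially"
    using klim unfolding filterlim_at_top by blast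
  from evk eventually_ge_at_top[of 1]
  show ?thesis
  proof eventually_elim
    case (elim n)
    have kn: "real (k n) \<ge> 1 / (\<delta>^2 * \<epsilon>)" using Z elim by linarith
    have kpos: "real (k n) > 0" using kb elim by auto
    have "1 / (\<delta>^2 * real (k n)) \<le> \<epsilon>"
      using kn kpos dpos ep by (simp add: field_simps)
    show ?case
    proof
      fix v
      have "\<bar>Bv n v - g (Yv n v)\<bar> \<le> \<epsilon> + 1 / (\<delta>^2 * real (k n))" by (rule bias_pt[OF elim(2) dpos uc])
      with \<open>1 / (\<delta>^2 * real (k n)) \<le> \<epsilon>\<close> show "\<bar>Bv n v - g (Yv n v)\<bar> \<le> 2 * \<epsilon>" by linarith
    qed
  qed
qed

end


context erw begin

lemma ysum: "real n * Yv n (Xv n \<omega>) = (\<Sum>m\<in>{1..n}. a m \<omega>)"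
proof (cases "n = 0")
  case True then show ?thesis by simp
next
  case False
  have "(\<Sum>m\<in>{1..n}. ind (Xv n \<omega> ! (m - 1) = 1)) = (\<Sum>m\<in>{1..n}. a m \<omega>)"
  proof (intro sum.cong refl)
    fix m assume "m \<in> {1..n}"
    from Xv_nth[OF this] show "ind (Xv n \<omega> ! (m - 1) = 1) = a m \<omega>" by (simp add: a_def)
  qed
  then show ?thesis using False by (simp add: Yv_def)
qed

lemma main:
  assumes xs: "xs \<in> {0..1}" and sgn: "\<forall>x\<in>{0..1}. x \<noteq> xs \<longrightarrow> (g x - x) * (x - xs) < 0"
  shows "AE \<omega> in M. (\<lambda>n. (\<Sum>i=1..n. X i \<omega>) / real n) \<longlonglongrightarrow> 2 * xs - 1"
  using Sm_as
proof (rule AE_mp, intro AE_I2 impI)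
  fix \<omega> assume w: "\<omega> \<in> space M" and S: "(\<lambda>n. Sm n \<omega> / real n) \<longlonglongrightarrow> 0"
  define y where "y n = Yv n (Xv n \<omega>)" for n
  define vv where "vv n = y n - Sm n \<omega> / real n" for n
  define e where "e n = B n \<omega> - g (y n)" for n
  have ys: "real n * y n = (\<Sum>m\<in>{1..n}. a m \<omega>)" for n unfolding y_def by (rule ysum)
  have y01: "\<forall>n. y n \<in> {0..1}" using Yv_range by (simp add: y_def)
  have rec: "\<forall>n\<ge>1. real (n+1) * vv (n+1) = real n * vv n + g (y n) + e n"
  proof (intro allI impI)
    fix n :: nat assume n: "n \<ge> 1"
    have "real (n+1) * vv (n+1) = real (n+1) * y (n+1) - Sm (Suc n) \<omega>"
      by (simp add: vv_def right_diff_distrib)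
    also have "\<dots> = (\<Sum>m\<in>{1..n}. a m \<omega>) + a (Suc n) \<omega> - Sm n \<omega> - \<zeta> n \<omega>"
      using ys[of "n+1"] by (simp add: Sm_Suc[OF n])
    also have "\<dots> = real n * y n - Sm n \<omega> + B n \<omega>" using ys[of n] by (simp add: \<zeta>_def)
    also have "real n * y n - Sm n \<omega> = real n * vv n" using n by (simp add: vv_def right_diff_distrib)
    finally show "real (n+1) * vv (n+1) = real n * vv n + g (y n) + e n" by (simp add: e_def)
  qed
  have e0: "e \<longlonglongrightarrow> 0"
    unfolding tendsto_iff dist_real_def
  proof (intro allI impI)
    fix r :: real assume r: "r > 0"
    have "r/3 > 0" using r by simp
    from bias[OF this] show "eventually (\<lambda>n. \<bar>e n - 0\<bar> < r) sequentially"
    proof (rule eventually_mono)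
      fix n assume "\<forall>v. \<bar>Bv n v - g (Yv n v)\<bar> \<le> 2 * (r / 3)"
      then have "\<bar>e n\<bar> \<le> 2 * (r/3)" by (simp add: e_def B_def y_def)
      then show "\<bar>e n - 0\<bar> < r" using r by simp
    qed
  qed
  have yv: "(\<lambda>n. y n - vv n) \<longlonglongrightarrow> 0" using S by (simp add: vv_def)
  have gr: "\<forall>x\<in>{0..1}. g x \<in> {0..1}" using g01 by blast
  have yl: "y \<longlonglongrightarrow> xs"
    by (rule sa_conv[OF g_cont[OF fc] gr xs sgn y01 rec e0 yv])
  have "(\<lambda>n. 2 * y n - 1) \<longlonglongrightarrow> 2 * xs - 1"
    by (intro tendsto_intros yl)
  moreover have "eventually (\<lambda>n. 2 * y n - 1 = (\<Sum>i=1..n. X i \<omega>) / real n) sequentially"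
    using eventually_ge_at_top[of 1]
  proof (rule eventually_mono)
    fix n :: nat assume n: "n \<ge> 1"
    have Xa: "X i \<omega> = 2 * a i \<omega> - 1" if "i \<in> {1..n}" for i
      using Xval[of i \<omega>] that w by (auto simp: a_def ind_def)
    have "(\<Sum>i=1..n. X i \<omega>) = 2 * (\<Sum>i=1..n. a i \<omega>) - real n"
      by (simp add: Xa sum_subtractf sum_distrib_left)
    also have "\<dots> = 2 * (real n * y n) - real n" using ys by simp
    finally show "2 * y n - 1 = (\<Sum>i=1..n. X i \<omega>) / real n" using n by (simp add: field_simps)
  qed
  ultimately show "(\<lambda>n. (\<Sum>i=1..n. X i \<omega>) / real n) \<longlonglongrightarrow> 2 * xs - 1"
    by (rule Lim_transform_eventually)
qed

end

theorem theorem4p6: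
  fixes M :: "'a measure" and q p :: real and f :: "real \<Rightarrow> real" and k :: "nat \<Rightarrow> nat"
    and X :: "nat \<Rightarrow> 'a \<Rightarrow> real" and U :: "nat \<Rightarrow> nat \<Rightarrow> 'a \<Rightarrow> nat"
  assumes q: "q \<in> {0..1}"
    and p: "p \<in> {0<..<1}" "p \<noteq> 1/2"
    and f_range: "f ` {0..1} \<subseteq> {0..1}"
    and k_mono: "\<forall>n\<ge>1. k n \<le> k (Suc n)"
    and k_bounds: "\<forall>n\<ge>1. 1 \<le> k n \<and> k n \<le> n"
    and k_lim: "filterlim k at_top sequentially"
    and proc: "erw_process M q p f k X U"
    and F: "(continuous_on {0..1} f \<and>
              summable (\<lambda>n. 1 / (real (Suc n) + 1) * modulus01 f (real (k (Suc n)) powr (-1/2))))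
          \<or> (\<exists>\<alpha> L. 0 < \<alpha> \<and> \<alpha> \<le> 1 \<and> L > 0 \<and>
              (\<forall>x\<in>{0..1}. \<forall>y\<in>{0..1}. \<bar>f x - f y\<bar> \<le> L * \<bar>x - y\<bar> powr \<alpha>) \<and>
              summable (\<lambda>n. 1 / (real (Suc n) + 1) * real (k (Suc n)) powr (-\<alpha>/2)))
          \<or> (\<exists>f'. C1_01 f f' \<and>
              summable (\<lambda>n. 1 / ((real (Suc n) + 1) * sqrt (real (k (Suc n))))
                               * modulus01 f' (real (k (Suc n)) powr (-1/2))))
          \<or> (C2_01 f \<and> summable (\<lambda>n. 1 / ((real (Suc n) + 1) * real (k (Suc n)))))"
  shows
    "(\<forall>xs\<in>{0..1}. erw_g p f xs = xs \<and>
        (\<forall>x\<in>{0..1}. erw_g p f x = x \<longrightarrow> x = xs) \<and>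
        (\<forall>x\<in>{0..1}. x \<noteq> xs \<longrightarrow> (erw_g p f x - x) * (x - xs) < 0)
        \<longrightarrow> (AE \<omega> in M. (\<lambda>n. (\<Sum>i=1..n. X i \<omega>) / real n) \<longlonglongrightarrow> 2 * xs - 1))
   \<and> (\<forall>xs\<in>{0..1}. erw_g p f xs = xs \<and> (\<forall>x\<in>{0..1}. erw_g p f x = x \<longrightarrow> x = xs)
        \<longrightarrow> (AE \<omega> in M. (\<lambda>n. (\<Sum>i=1..n. X i \<omega>) / real n) \<longlonglongrightarrow> 2 * xs - 1))
   \<and> ((\<exists>f'. C1_01 f f' \<and>
          ((1/2 < p \<and> strict_antimono_on {0..1} f) \<or> (p < 1/2 \<and> strict_mono_on {0..1} f)))
       \<or> (C2_01 f \<and> (strictly_convex_on {0<..<1} f \<or> strictly_convex_on {0<..<1} (\<lambda>x. - f x)))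
       \<or> (\<exists>c. (\<forall>x\<in>{0..1}. \<forall>y\<in>{0..1}. \<bar>f x - f y\<bar> \<le> c * \<bar>x - y\<bar>) \<and> c * \<bar>2 * p - 1\<bar> < 1)
      \<longrightarrow> (\<exists>!xs. xs \<in> {0..1} \<and> erw_g p f xs = xs) \<and>
          (\<forall>xs\<in>{0..1}. erw_g p f xs = xs
             \<longrightarrow> (AE \<omega> in M. (\<lambda>n. (\<Sum>i=1..n. X i \<omega>) / real n) \<longlonglongrightarrow> 2 * xs - 1)))"
proof -
  have fc: "continuous_on {0..1} f"
    by (rule f_cont_from_F) (use F in blast)
  have ps: "prob_space M" using proc unfolding erw_process_def by blast
  interpret E: erw M q p f k X U
    by (rule erw.intro[OF ps], unfold_locales) (use proc p f_range k_bounds k_lim fc in auto)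
  have gc: "continuous_on {0..1} (erw_g p f)" by (rule g_cont[OF fc])
  have g0: "erw_g p f 0 \<ge> 0" and g1: "erw_g p f 1 \<le> 1" using E.g01[of 0] E.g01[of 1] by auto
  have P1: "\<forall>xs\<in>{0..1}. erw_g p f xs = xs \<and>
        (\<forall>x\<in>{0..1}. erw_g p f x = x \<longrightarrow> x = xs) \<and>
        (\<forall>x\<in>{0..1}. x \<noteq> xs \<longrightarrow> (erw_g p f x - x) * (x - xs) < 0)
        \<longrightarrow> (AE \<omega> in M. (\<lambda>n. (\<Sum>i=1..n. X i \<omega>) / real n) \<longlonglongrightarrow> 2 * xs - 1)"
    using E.main by blast
  have P2: "\<forall>xs\<in>{0..1}. erw_g p f xs = xs \<and> (\<forall>x\<in>{0..1}. erw_g p f x = x \<longrightarrow> x = xs)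
        \<longrightarrow> (AE \<omega> in M. (\<lambda>n. (\<Sum>i=1..n. X i \<omega>) / real n) \<longlonglongrightarrow> 2 * xs - 1)"
  proof (intro ballI impI)
    fix xs assume xs: "xs \<in> {0..1}" and h: "erw_g p f xs = xs \<and> (\<forall>x\<in>{0..1}. erw_g p f x = x \<longrightarrow> x = xs)"
    have "\<forall>x\<in>{0..1}. x \<noteq> xs \<longrightarrow> (erw_g p f x - x) * (x - xs) < 0"
      by (rule fp_sign[OF gc g0 g1 xs]) (use h in auto)
    then show "AE \<omega> in M. (\<lambda>n. (\<Sum>i=1..n. X i \<omega>) / real n) \<longlonglongrightarrow> 2 * xs - 1"
      using E.main[OF xs] by blast
  qed
  have P3: "?thesis" if G: "(\<exists>f'. C1_01 f f' \<and>
          ((1/2 < p \<and> strict_antimono_on {0..1} f) \<or> (p < 1/2 \<and> strict_mono_on {0..1} f)))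
       \<or> (C2_01 f \<and> (strictly_convex_on {0<..<1} f \<or> strictly_convex_on {0<..<1} (\<lambda>x. - f x)))
       \<or> (\<exists>c. (\<forall>x\<in>{0..1}. \<forall>y\<in>{0..1}. \<bar>f x - f y\<bar> \<le> c * \<bar>x - y\<bar>) \<and> c * \<bar>2 * p - 1\<bar> < 1)"
  proof -
    have U: "\<forall>x\<in>{0..1}. \<forall>y\<in>{0..1}. erw_g p f x = x \<longrightarrow> erw_g p f y = y \<longrightarrow> x = y"
      by (rule fp_unique_G[OF p f_range fc G])
    obtain x0 where x0: "x0 \<in> {0..1}" "erw_g p f x0 = x0" using fp_exists[OF gc g0 g1] by blast
    have ex1: "\<exists>!xs. xs \<in> {0..1} \<and> erw_g p f xs = xs"
      using x0 U by blast
    have "\<forall>xs\<in>{0..1}. erw_g p f xs = xs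
             \<longrightarrow> (AE \<omega> in M. (\<lambda>n. (\<Sum>i=1..n. X i \<omega>) / real n) \<longlonglongrightarrow> 2 * xs - 1)"
      using P2 U by blast
    with ex1 show ?thesis using P1 P2 by blast
  qed
  show ?thesis using P1 P2 P3 by blast
qed


end
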